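(* Let $h_s,g_s$ be scaling filters, with associated wavelet filters $h_w,g_w$, and let $\varepsilon\ge0$ be such that \[ \bigl| h_s(k)-e^{\mathrm i k/2} g_s(k)\bigr|\le\varepsilon \quad\text{for all } k\in(-\pi,\pi). \] Then for every integer $\mathcal L\ge1$ and every $\ell=1,\dots,\mathcal L$, \[ \bigl\lVert W_g^{(\mathcal L)\dagger}(I\otimes|\ell\rangle)-m(\theta_w)\,W_h^{(\mathcal L)\dagger}(I\otimes|\ell\rangle)\bigr\rVert\le\varepsilon\,\ell, \] where $\lVert\cdot\rVert$ is the operator norm. Consequently $\bigl\lVert W_g^{(\mathcal L)\dagger}p_w^{(\mathcal L)}-m(\theta_w)W_h^{(\mathcal L)\dagger}p_w^{(\mathcal L)}\bigr\rVert\le\varepsilon\mathcal L^2$.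
   Context: Fourier convention: for $f\in\ell^2(\mathbb Z)$, $\hat f(k)=\sum_n f[n]e^{-\mathrm i nk}$, a $2\pi$-periodic function; for a filter $h$ we write $h(k)$ for its Fourier transform. For a bounded measurable $2\pi$-periodic function $\theta$, $m(\theta)$ denotes the Fourier multiplier $(m(\theta)f)^\wedge(k)=\theta(k)\hat f(k)$; $m(h)$ is multiplication by $h(k)$. The upsampling operator $\uparrow$ is $\delta_n\mapsto\delta_{2n}$. A scaling filter is a finitely supported sequence $h_s$ with $|h_s(k)|^2+|h_s(k+\pi)|^2=2$, $h_s(0)=\sqrt2$, generating an orthonormal multiresolution analysis. Its wavelet filter is $h_w(k)=e^{\mathrm ik}\overline{h_s(k+\pi)}$ (similarly $g_w$ from $g_s$), where $k+\pi$ is reduced modulo $2\pi$ into $(-\pi,\pi)$. The truncated wavelet transform $W_h^{(\mathcal L)}:\ell^2(\mathbb Z)\to\ell^2(\mathbb Z)\otimes\mathbb C^{\mathcal L+1}$ is the unitary with $W_h^{(\mathcal L)\dagger}(I\otimes|\ell\rangle)=[m(h_s)\uparrow]^{\ell-1}m(h_w)\uparrow$ for $1\le\ell\le\mathcal L$ and $W_h^{(\mathcal L)\dagger}(I\otimes|\mathcal L+1\rangle)=[m(h_s)\uparrow]^{\mathcal L}$; $W_g^{(\mathcal L)}$ is defined likewise from $g_s,g_w$. $p_w^{(\mathcal L)}=I\otimes\sum_{\ell=1}^{\mathcal L}|\ell\rangle\langle\ell|$. The function $\theta_w$ is the $2\pi$-periodic function with $\theta_w(k)=-\mathrm i\,\mathrm{sign}(k)\,e^{\mathrm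 ik/2}$ for $k\in(-\pi,\pi)$. *)

theory Defs
  imports "HOL-Analysis.Analysis"
begin

definition l2_space :: "('a \<Rightarrow> complex) set" where
  "l2_space = {f. (\<lambda>x. (cmod (f x))\<^sup>2) summable_on UNIV}"

definition l2norm :: "('a \<Rightarrow> complex) \<Rightarrow> real" where
  "l2norm f = sqrt (\<Sum>\<^sub>\<infinity>x. (cmod (f x))\<^sup>2)"

definition op_norm :: "('a \<Rightarrow> complex) set \<Rightarrow> (('a \<Rightarrow> complex) \<Rightarrow> ('b \<Rightarrow> complex)) \<Rightarrow> real" where
  "op_norm D T = (SUP f\<in>D. l2norm (T f) / l2norm f)"

definition filt_ft :: "(int \<Rightarrow> complex) \<Rightarrow> real \<Rightarrow> complex" where
  "filt_ft h k = (\<Sum>n\<in>{n. h n \<noteq> 0}. h n * exp (- \<i> * of_int n * of_real k))"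

text \<open>Fourier coefficients c_j = (1/2pi) int_{-pi}^{pi} theta(k) e^{i j k} dk, so that
  theta(k) = sum_j c_j e^{-i j k}.\<close>
definition fcoeff :: "(real \<Rightarrow> complex) \<Rightarrow> int \<Rightarrow> complex" where
  "fcoeff \<theta> j = set_lebesgue_integral lborel {-pi..pi}
                    (\<lambda>k. \<theta> k * exp (\<i> * of_int j * of_real k)) / of_real (2 * pi)"

text \<open>Fourier multiplier m(theta): (m(theta) f)^ = theta * f^, i.e. convolution of f with the
  Fourier coefficients of theta (absolutely convergent for f in l2).\<close>
definition mult :: "(real \<Rightarrow> complex) \<Rightarrow> (int \<Rightarrow> complex) \<Rightarrow> (int \<Rightarrow> complex)" where
  "mult \<theta> f = (\<lambda>n. \<Sum>\<^sub>\<infinity>j. fcoeff \<theta> j * f (n - j))"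

definition up :: "(int \<Rightarrow> complex) \<Rightarrow> (int \<Rightarrow> complex)" where
  "up f = (\<lambda>n. if even n then f (n div 2) else 0)"

definition generates_onMRA :: "(int \<Rightarrow> complex) \<Rightarrow> bool" where
  "generates_onMRA h \<longleftrightarrow> (\<exists>\<phi> :: real \<Rightarrow> complex.
      \<phi> \<in> borel_measurable lborel \<and>
      integrable lborel (\<lambda>x. (cmod (\<phi> x))\<^sup>2) \<and>
      (AE x in lborel. \<phi> x = of_real (sqrt 2) *
          (\<Sum>n\<in>{n. h n \<noteq> 0}. h n * \<phi> (2 * x - of_int n))) \<and>
      (\<forall>m n :: int. integral\<^sup>L lborel (\<lambda>x. \<phi> (x - of_int m) * cnj (\<phi> (x - of_int n)))
                    = (if m = n then 1 else 0)))"

definition scaling_filter :: "(int \<Rightarrow> complex) \<Rightarrow> bool" where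
  "scaling_filter h \<longleftrightarrow>
     finite {n. h n \<noteq> 0} \<and>
     (\<forall>k. (cmod (filt_ft h k))\<^sup>2 + (cmod (filt_ft h (k + pi)))\<^sup>2 = 2) \<and>
     filt_ft h 0 = of_real (sqrt 2) \<and>
     generates_onMRA h"

text \<open>Wavelet filter in the Fourier domain: h_w(k) = e^{ik} conj(h_s(k+pi))
  (h_s is 2pi-periodic, so reduction of k+pi mod 2pi is immaterial).\<close>
definition wav_ft :: "(int \<Rightarrow> complex) \<Rightarrow> real \<Rightarrow> complex" where
  "wav_ft h k = exp (\<i> * of_real k) * cnj (filt_ft h (k + pi))"

text \<open>The column W^{(L)dagger}(I \<otimes> |l>) as an operator on l2(Z).\<close>
definition wcol :: "(int \<Rightarrow> complex) \<Rightarrow> nat \<Rightarrow> nat \<Rightarrow> (int \<Rightarrow> complex) \<Rightarrow> (int \<Rightarrow> complex)" where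
  "wcol h L l = (if 1 \<le> l \<and> l \<le> L
      then ((mult (filt_ft h) \<circ> up) ^^ (l - 1)) \<circ> mult (wav_ft h) \<circ> up
      else if l = L + 1 then (mult (filt_ft h) \<circ> up) ^^ L
      else (\<lambda>f n. 0))"

text \<open>Elements of l2(Z) \<otimes> C^{L+1} are functions F(n,l), l in {1..L+1}.\<close>
definition tensor_space :: "nat \<Rightarrow> (int \<times> nat \<Rightarrow> complex) set" where
  "tensor_space L = {F \<in> l2_space. \<forall>n l. l \<notin> {1..L+1} \<longrightarrow> F (n, l) = 0}"

text \<open>f \<otimes> |l>, i.e. (I \<otimes> |l>) f.\<close>
definition ket_embed :: "nat \<Rightarrow> (int \<Rightarrow> complex) \<Rightarrow> (int \<times> nat \<Rightarrow> complex)" where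
  "ket_embed l f = (\<lambda>(n, l'). if l' = l then f n else 0)"

definition Wdag :: "(int \<Rightarrow> complex) \<Rightarrow> nat \<Rightarrow> (int \<times> nat \<Rightarrow> complex) \<Rightarrow> (int \<Rightarrow> complex)" where
  "Wdag h L F = (\<lambda>n. \<Sum>l=1..L+1. wcol h L l (\<lambda>m. F (m, l)) n)"

definition p_w :: "nat \<Rightarrow> (int \<times> nat \<Rightarrow> complex) \<Rightarrow> (int \<times> nat \<Rightarrow> complex)" where
  "p_w L F = (\<lambda>(n, l). if 1 \<le> l \<and> l \<le> L then F (n, l) else 0)"

text \<open>theta_w(k) = -i sign(k) e^{ik/2} on (-pi,pi), extended 2pi-periodically
  (reduce k to [-pi,pi)).\<close>
definition theta_w :: "real \<Rightarrow> complex" where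
  "theta_w k = (let k' = k - 2 * pi * of_int \<lfloor>(k + pi) / (2 * pi)\<rfloor>
                in - \<i> * of_real (sgn k') * exp (\<i> * of_real (k' / 2)))"

end

theory Submission
  imports Defs
begin


definition bm :: "(real \<Rightarrow> 'a::{banach,second_countable_topology}) \<Rightarrow> bool" where
  "bm f \<longleftrightarrow> f \<in> borel_measurable borel \<and> (\<exists>B. \<forall>x. norm (f x) \<le> B)"

lemma bm_set_integrable:
  assumes "bm f" shows "set_integrable lborel {a..b} f"
proof -
  obtain B where B: "\<forall>x. norm (f x) \<le> B" and m[measurable]: "f \<in> borel_measurable borel"
    using assms bm_def by blast
  have "set_integrable lborel {a..b} (\<lambda>_. B)"
    by (rule borel_integrable_atLeastAtMost') (rule continuous_on_const)
  then show ?thesis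
  proof (rule set_integrable_bound)
    show "set_borel_measurable lborel {a..b} f"
      unfolding set_borel_measurable_def by measurable
    show "AE x in lborel. x \<in> {a..b} \<longrightarrow> norm (f x) \<le> norm B"
      using B by (auto intro!: AE_I2 intro: order_trans[OF _ abs_ge_self])
  qed
qed

lemma bm_measurable: "bm f \<Longrightarrow> f \<in> borel_measurable borel"
  by (simp add: bm_def)

lemma bm_const[simp, intro]: "bm (\<lambda>x. c)"
  unfolding bm_def by auto

lemma bm_add[intro]: "bm f \<Longrightarrow> bm g \<Longrightarrow> bm (\<lambda>x. f x + g x)"
  unfolding bm_def
proof (elim conjE exE, intro conjI)
  fix B C assume "\<forall>x. norm (f x) \<le> B" "\<forall>x. norm (g x) \<le> C"
  then show "\<exists>B. \<forall>x. norm (f x + g x) \<le> B"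
    by (intro exI[of _ "B + C"]) (metis add_mono norm_triangle_ineq order_trans)
qed auto

lemma bm_diff[intro]: "bm f \<Longrightarrow> bm g \<Longrightarrow> bm (\<lambda>x. f x - g x)"
  unfolding bm_def
proof (elim conjE exE, intro conjI)
  fix B C assume "\<forall>x. norm (f x) \<le> B" "\<forall>x. norm (g x) \<le> C"
  then show "\<exists>B. \<forall>x. norm (f x - g x) \<le> B"
    by (intro exI[of _ "B + C"]) (metis add_mono norm_triangle_ineq4 order_trans)
qed auto

lemma bm_mult[intro]:
  fixes f g :: "real \<Rightarrow> 'a::{banach,second_countable_topology,real_normed_algebra}"
  shows "bm f \<Longrightarrow> bm g \<Longrightarrow> bm (\<lambda>x. f x * g x)"
  unfolding bm_def
proof (elim conjE exE, intro conjI)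
  fix B C assume B: "\<forall>x. norm (f x) \<le> B" and C: "\<forall>x. norm (g x) \<le> C"
  then show "\<exists>B. \<forall>x. norm (f x * g x) \<le> B"
  proof (intro exI[of _ "B * C"] allI)
    fix x
    have "norm (f x * g x) \<le> norm (f x) * norm (g x)" by (rule norm_mult_ineq)
    also have "\<dots> \<le> B * C" using B C by (meson mult_mono norm_ge_zero order_trans)
    finally show "norm (f x * g x) \<le> B * C" .
  qed
qed auto

lemma bm_sum[intro]: "(\<And>i. i \<in> I \<Longrightarrow> bm (f i)) \<Longrightarrow> bm (\<lambda>x. \<Sum>i\<in>I. f i x)"
proof (induction I rule: infinite_finite_induct)
  case (insert i I) then show ?case by (simp add: bm_add)
qed auto

lemma cnj_measurable: "(cnj :: complex \<Rightarrow> complex) \<in> borel_measurable borel"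
  by (intro borel_measurable_continuous_onI continuous_on_cnj continuous_on_id)

lemma bm_cnj[intro]: "bm f \<Longrightarrow> bm (\<lambda>x. cnj (f x))"
  unfolding bm_def using measurable_compose[OF _ cnj_measurable] by auto

lemma bm_cmod[intro]: "bm f \<Longrightarrow> bm (\<lambda>x. cmod (f x))"
  unfolding bm_def by auto

lemma bm_of_real[intro]: "bm f \<Longrightarrow> bm (\<lambda>x. complex_of_real (f x))"
  unfolding bm_def by auto

lemma bm_power2[intro]: "bm (f :: real \<Rightarrow> real) \<Longrightarrow> bm (\<lambda>x. (f x)\<^sup>2)"
  unfolding power2_eq_square by (rule bm_mult)

lemma bm_affine[intro]: "bm f \<Longrightarrow> bm (\<lambda>x. f (c * x + d))"
  unfolding bm_def
proof (elim conjE exE, intro conjI)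
  assume [measurable]: "f \<in> borel_measurable borel"
  show "(\<lambda>x. f (c * x + d)) \<in> borel_measurable borel" by measurable
qed auto

lemma bm_scale[intro]: "bm f \<Longrightarrow> bm (\<lambda>x. f (c * x))"
  using bm_affine[of f c 0] by simp

lemma bm_cont:
  assumes "continuous_on UNIV f" "\<And>x. norm (f x) \<le> B" shows "bm f"
  unfolding bm_def using assms borel_measurable_continuous_onI by blast

lemma bm_exp[intro]: "bm (\<lambda>k::real. exp (\<i> * of_int m * of_real k))"
proof (rule bm_cont[where B=1])
  show "continuous_on UNIV (\<lambda>k::real. exp (\<i> * of_int m * of_real k))"
    by (intro continuous_intros)
  fix x :: real
  have "\<i> * of_int m * of_real x = \<i> * of_real (of_int m * x)" by simp
  then show "norm (exp (\<i> * of_int m * of_real x)) \<le> 1"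
    by (simp only: norm_exp_i_times)
qed

lemma orth_HK:
  fixes m :: int
  shows "((\<lambda>k::real. exp (\<i> * of_int m * of_real k)) has_integral (if m = 0 then 2*pi else 0)) {-pi..pi}"
proof (cases "m = 0")
  case True
  have "((\<lambda>k::real. 1::complex) has_integral of_real (2*pi)) {-pi..pi}"
    using has_integral_const_real[of "1::complex" "-pi" pi] by (simp add: scaleR_conv_of_real)
  then show ?thesis using True by simp
next
  case False
  define F where "F = (\<lambda>z::complex. exp (\<i> * of_int m * z) / (\<i> * of_int m))"
  have d: "(F has_field_derivative exp (\<i> * of_int m * z)) (at z)" for z
    unfolding F_def using False
    by (auto intro!: derivative_eq_intros)
  have "((\<lambda>k::real. F (of_real k)) has_vector_derivative exp (\<i> * of_int m * of_real k)) (at k within {-pi..pi})" for k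
    by (rule has_vector_derivative_real_field) (rule d)
  then have "((\<lambda>k::real. exp (\<i> * of_int m * of_real k)) has_integral F (of_real pi) - F (of_real (-pi))) {-pi..pi}"
    by (intro fundamental_theorem_of_calculus) auto
  moreover have "F (of_real pi) = F (of_real (-pi))"
  proof -
    have "exp (\<i> * of_int m * of_real pi) = exp (\<i> * of_int m * of_real (-pi) + \<i> * (of_int m * (of_real pi * 2)))"
      by (simp add: algebra_simps)
    also have "\<dots> = exp (\<i> * of_int m * of_real (-pi))" by (rule exp_plus_2pin)
    finally show ?thesis unfolding F_def by simp
  qed
  ultimately show ?thesis using False by simp
qed

lemma orth:
  fixes m :: int
  shows "(LINT k:{-pi..pi}|lborel. exp (\<i> * of_int m * of_real k)) = (if m = 0 then 2*pi else 0)"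
proof -
  have i: "set_integrable lborel {-pi..pi} (\<lambda>k::real. exp (\<i> * of_int m * of_real k))"
    by (rule bm_set_integrable) (rule bm_exp)
  have "(LINT k:{-pi..pi}|lborel. exp (\<i> * of_int m * of_real k)) = integral {-pi..pi} (\<lambda>k::real. exp (\<i> * of_int m * of_real k))"
    by (rule set_borel_integral_eq_integral(2)[OF i])
  also have "\<dots> = (if m = 0 then 2*pi else 0)"
    by (rule integral_unique[OF orth_HK])
  finally show ?thesis .
qed


definition tp :: "(int \<Rightarrow> complex) \<Rightarrow> int set \<Rightarrow> real \<Rightarrow> complex" where
  "tp a S k = (\<Sum>n\<in>S. a n * exp (- \<i> * of_int n * of_real k))"

lemma exp_mi_eq: "exp (- \<i> * of_int n * of_real k) = exp (\<i> * of_int (-n) * of_real k)"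
  by simp

lemma bm_exp_m[intro]: "bm (\<lambda>k::real. exp (- \<i> * of_int m * of_real k))"
  unfolding exp_mi_eq by (rule bm_exp)

lemma bm_tp[intro]: "bm (tp a S)"
  unfolding tp_def[abs_def] by (intro bm_sum bm_mult bm_const bm_exp_m)

lemma set_integral_sum':
  fixes f :: "'i \<Rightarrow> 'a \<Rightarrow> 'b::{banach,second_countable_topology}"
  assumes "\<And>i. i \<in> I \<Longrightarrow> set_integrable M A (f i)"
  shows "(LINT x:A|M. (\<Sum>i\<in>I. f i x)) = (\<Sum>i\<in>I. LINT x:A|M. f i x)"
  using assms unfolding set_lebesgue_integral_def set_integrable_def
  by (simp add: scaleR_sum_right Bochner_Integration.integral_sum)

lemma fc_sum:
  assumes "\<And>n. n \<in> S \<Longrightarrow> bm (F n)"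
  shows "fcoeff (\<lambda>k. \<Sum>n\<in>S. F n k) j = (\<Sum>n\<in>S. fcoeff (F n) j)"
proof -
  have "(LINT k:{-pi..pi}|lborel. (\<Sum>n\<in>S. F n k) * exp (\<i> * of_int j * of_real k))
      = (LINT k:{-pi..pi}|lborel. (\<Sum>n\<in>S. F n k * exp (\<i> * of_int j * of_real k)))"
    by (simp add: sum_distrib_right)
  also have "\<dots> = (\<Sum>n\<in>S. LINT k:{-pi..pi}|lborel. F n k * exp (\<i> * of_int j * of_real k))"
    by (rule set_integral_sum') (intro bm_set_integrable bm_mult assms bm_exp)
  finally show ?thesis unfolding fcoeff_def by (simp add: sum_divide_distrib)
qed

lemma fc_diff:
  assumes "bm F" "bm G"
  shows "fcoeff (\<lambda>k. F k - G k) j = fcoeff F j - fcoeff G j"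
proof -
  have "(LINT k:{-pi..pi}|lborel. (F k - G k) * exp (\<i> * of_int j * of_real k))
      = (LINT k:{-pi..pi}|lborel. F k * exp (\<i> * of_int j * of_real k) - G k * exp (\<i> * of_int j * of_real k))"
    by (simp add: left_diff_distrib)
  also have "\<dots> = (LINT k:{-pi..pi}|lborel. F k * exp (\<i> * of_int j * of_real k)) - (LINT k:{-pi..pi}|lborel. G k * exp (\<i> * of_int j * of_real k))"
    by (rule set_integral_diff) (intro bm_set_integrable bm_mult assms bm_exp)+
  finally show ?thesis unfolding fcoeff_def by (simp add: diff_divide_distrib)
qed

lemma fc_cmult: "fcoeff (\<lambda>k. c * F k) j = c * fcoeff F j"
  unfolding fcoeff_def by (simp add: mult.assoc)

lemma fc_shift: "fcoeff (\<lambda>k. F k * exp (- \<i> * of_int n * of_real k)) j = fcoeff F (j - n)"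
proof -
  have "F k * exp (- \<i> * of_int n * of_real k) * exp (\<i> * of_int j * of_real k) = F k * exp (\<i> * of_int (j - n) * of_real k)" for k
  proof -
    have "exp (- \<i> * of_int n * of_real k) * exp (\<i> * of_int j * of_real k) = exp (- \<i> * of_int n * of_real k + \<i> * of_int j * of_real k)"
      by (rule exp_add[symmetric])
    also have "- \<i> * of_int n * of_real k + \<i> * of_int j * of_real k = \<i> * of_int (j - n) * of_real k"
      by (simp add: algebra_simps)
    finally show ?thesis by (simp add: mult.assoc)
  qed
  then show ?thesis unfolding fcoeff_def by (simp only:)
qed

lemma fc_one: "fcoeff (\<lambda>k. 1) j = (if j = 0 then 1 else 0)"
  unfolding fcoeff_def using orth[of j] by simp

lemma fc_tp_mult:
  assumes "bm \<Theta>" "finite S"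
  shows "fcoeff (\<lambda>k. \<Theta> k * tp a S k) j = (\<Sum>n\<in>S. a n * fcoeff \<Theta> (j - n))"
proof -
  have "fcoeff (\<lambda>k. \<Theta> k * tp a S k) j = fcoeff (\<lambda>k. \<Sum>n\<in>S. a n * (\<Theta> k * exp (- \<i> * of_int n * of_real k))) j"
    unfolding tp_def by (simp add: sum_distrib_left algebra_simps)
  also have "\<dots> = (\<Sum>n\<in>S. fcoeff (\<lambda>k. a n * (\<Theta> k * exp (- \<i> * of_int n * of_real k))) j)"
    by (rule fc_sum) (intro bm_mult bm_const assms bm_exp_m)
  also have "\<dots> = (\<Sum>n\<in>S. a n * fcoeff \<Theta> (j - n))"
    by (intro sum.cong refl) (simp only: fc_cmult fc_shift)
  finally show ?thesis .
qed

lemma fc_tp: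
  assumes "finite S"
  shows "fcoeff (tp a S) j = (if j \<in> S then a j else 0)"
proof -
  have "fcoeff (tp a S) j = fcoeff (\<lambda>k. 1 * tp a S k) j" by simp
  also have "\<dots> = (\<Sum>n\<in>S. a n * (if j - n = 0 then 1 else 0))"
    by (subst fc_tp_mult) (auto simp: assms fc_one)
  also have "\<dots> = (\<Sum>n\<in>S. if n = j then a n else 0)"
    by (intro sum.cong) auto
  also have "\<dots> = (if j \<in> S then a j else 0)"
    using assms by (simp add: sum.delta')
  finally show ?thesis .
qed

lemma cnj_tp: "cnj (tp a S k) = (\<Sum>n\<in>S. cnj (a n) * exp (\<i> * of_int n * of_real k))"
  unfolding tp_def by (simp add: exp_cnj)

lemma int_conj_tp:
  assumes "bm F" "finite S"
  shows "(LINT k:{-pi..pi}|lborel. F k * cnj (tp a S k)) = 2 * pi * (\<Sum>n\<in>S. cnj (a n) * fcoeff F n)"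
proof -
  have "(LINT k:{-pi..pi}|lborel. F k * cnj (tp a S k))
     = (LINT k:{-pi..pi}|lborel. (\<Sum>n\<in>S. cnj (a n) * (F k * exp (\<i> * of_int n * of_real k))))"
    unfolding cnj_tp by (simp add: sum_distrib_left algebra_simps)
  also have "\<dots> = (\<Sum>n\<in>S. LINT k:{-pi..pi}|lborel. cnj (a n) * (F k * exp (\<i> * of_int n * of_real k)))"
    by (rule set_integral_sum') (intro bm_set_integrable bm_mult bm_const assms bm_exp)
  also have "\<dots> = (\<Sum>n\<in>S. cnj (a n) * (2 * pi * fcoeff F n))"
    unfolding fcoeff_def by simp
  finally show ?thesis by (simp add: sum_distrib_left algebra_simps)
qed

lemma sum_cnj_sq: "(\<Sum>n\<in>S. cnj (c n) * c n) = complex_of_real (\<Sum>n\<in>S. (cmod (c n))\<^sup>2)"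
  by (simp only: of_real_sum complex_norm_square mult.commute)

lemma parseval_tp:
  assumes "finite S"
  shows "(LINT k:{-pi..pi}|lborel. (cmod (tp a S k))\<^sup>2) = 2 * pi * (\<Sum>n\<in>S. (cmod (a n))\<^sup>2)"
proof -
  have "complex_of_real (LINT k:{-pi..pi}|lborel. (cmod (tp a S k))\<^sup>2) = (LINT k:{-pi..pi}|lborel. complex_of_real ((cmod (tp a S k))\<^sup>2))"
    by (rule set_integral_complex_of_real[symmetric])
  also have "\<dots> = (LINT k:{-pi..pi}|lborel. tp a S k * cnj (tp a S k))"
    by (simp only: complex_norm_square)
  also have "\<dots> = 2 * pi * (\<Sum>n\<in>S. cnj (a n) * fcoeff (tp a S) n)"
    by (rule int_conj_tp) (auto simp: assms)
  also have "\<dots> = 2 * pi * (\<Sum>n\<in>S. cnj (a n) * a n)"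
    using assms by (simp add: fc_tp)
  also have "\<dots> = complex_of_real (2 * pi * (\<Sum>n\<in>S. (cmod (a n))\<^sup>2))"
    by (simp only: sum_cnj_sq of_real_mult of_real_numeral)
  finally show ?thesis using of_real_eq_iff by blast
qed

lemma set_integral_cnj: "(LINT x:A|M. cnj (f x)) = cnj (LINT x:A|M. f x)"
  unfolding set_lebesgue_integral_def complex_cnj_scaleR[symmetric] by (rule Bochner_Integration.integral_cnj)


lemma bessel:
  assumes G: "bm G" and S: "finite S"
  shows "(\<Sum>n\<in>S. (cmod (fcoeff G n))\<^sup>2) \<le> (LINT k:{-pi..pi}|lborel. (cmod (G k))\<^sup>2) / (2 * pi)"
proof -
  define c where "c = fcoeff G"
  define P where "P = tp c S"
  define Q where "Q = (\<Sum>n\<in>S. (cmod (c n))\<^sup>2)"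
  have bP: "bm P" unfolding P_def by (rule bm_tp)
  have i: "set_integrable lborel {-pi..pi} (\<lambda>k. X k * cnj (Y k))" if "bm X" "bm Y" for X Y :: "real \<Rightarrow> complex"
    by (intro bm_set_integrable bm_mult bm_cnj that)
  have GP: "(LINT k:{-pi..pi}|lborel. G k * cnj (P k)) = of_real (2 * pi * Q)"
    unfolding P_def Q_def using int_conj_tp[OF G S, of c]
    by (simp only: c_def[symmetric] sum_cnj_sq of_real_mult of_real_numeral)
  have PG: "(LINT k:{-pi..pi}|lborel. P k * cnj (G k)) = of_real (2 * pi * Q)"
  proof -
    have "(LINT k:{-pi..pi}|lborel. P k * cnj (G k)) = (LINT k:{-pi..pi}|lborel. cnj (G k * cnj (P k)))"
      by (simp add: mult.commute)
    also have "\<dots> = cnj (LINT k:{-pi..pi}|lborel. G k * cnj (P k))" by (rule set_integral_cnj)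
    finally show ?thesis using GP by simp
  qed
  have PP: "(LINT k:{-pi..pi}|lborel. P k * cnj (P k)) = of_real (2 * pi * Q)"
    unfolding P_def Q_def using int_conj_tp[OF bm_tp[of c S] S, of c] S
    by (simp add: fc_tp sum_cnj_sq)
  have GG: "(LINT k:{-pi..pi}|lborel. G k * cnj (G k)) = complex_of_real (LINT k:{-pi..pi}|lborel. (cmod (G k))\<^sup>2)"
    by (simp only: complex_norm_square[symmetric] set_integral_complex_of_real)
  have "complex_of_real (LINT k:{-pi..pi}|lborel. (cmod (G k - P k))\<^sup>2)
      = (LINT k:{-pi..pi}|lborel. complex_of_real ((cmod (G k - P k))\<^sup>2))"
    by (rule set_integral_complex_of_real[symmetric])
  also have "\<dots> = (LINT k:{-pi..pi}|lborel. (G k - P k) * cnj (G k - P k))"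
    by (simp only: complex_norm_square)
  also have "\<dots> = (LINT k:{-pi..pi}|lborel. (G k * cnj (G k) - G k * cnj (P k)) - (P k * cnj (G k) - P k * cnj (P k)))"
    by (rule arg_cong[where f="\<lambda>f. set_lebesgue_integral lborel {-pi..pi} f"]) (simp add: fun_eq_iff algebra_simps)
  also have "\<dots> = ((LINT k:{-pi..pi}|lborel. G k * cnj (G k)) - (LINT k:{-pi..pi}|lborel. G k * cnj (P k)))
                 - ((LINT k:{-pi..pi}|lborel. P k * cnj (G k)) - (LINT k:{-pi..pi}|lborel. P k * cnj (P k)))"
  proof -
    have i1: "set_integrable lborel {-pi..pi} (\<lambda>k. G k * cnj (G k))" by (intro i G)
    have i2: "set_integrable lborel {-pi..pi} (\<lambda>k. G k * cnj (P k))" by (intro i G bP)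
    have i3: "set_integrable lborel {-pi..pi} (\<lambda>k. P k * cnj (G k))" by (intro i G bP)
    have i4: "set_integrable lborel {-pi..pi} (\<lambda>k. P k * cnj (P k))" by (intro i bP)
    show ?thesis
      by (simp only: set_integral_diff(2)[OF set_integral_diff(1)[OF i1 i2] set_integral_diff(1)[OF i3 i4]]
          set_integral_diff(2)[OF i1 i2] set_integral_diff(2)[OF i3 i4])
  qed
  also have "\<dots> = complex_of_real ((LINT k:{-pi..pi}|lborel. (cmod (G k))\<^sup>2) - 2 * pi * Q)"
    by (simp only: GG GP PG PP of_real_diff diff_diff_eq2 diff_add_cancel)
  finally have eq: "(LINT k:{-pi..pi}|lborel. (cmod (G k - P k))\<^sup>2) = (LINT k:{-pi..pi}|lborel. (cmod (G k))\<^sup>2) - 2 * pi * Q"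
    using of_real_eq_iff by blast
  have "0 \<le> (LINT k:{-pi..pi}|lborel. (cmod (G k - P k))\<^sup>2)"
    unfolding set_lebesgue_integral_def by (intro Bochner_Integration.integral_nonneg) simp
  then have "2 * pi * Q \<le> (LINT k:{-pi..pi}|lborel. (cmod (G k))\<^sup>2)" using eq by simp
  then show ?thesis unfolding Q_def c_def using pi_gt_zero by (simp add: field_simps)
qed


definition per :: "(real \<Rightarrow> 'a) \<Rightarrow> bool" where
  "per f \<longleftrightarrow> (\<forall>x. f (x + 2 * pi) = f x)"

lemma per_minus: "per f \<Longrightarrow> f (x - 2 * pi) = f x"
  unfolding per_def by (metis diff_add_cancel)

lemma lint_scale2:
  fixes f :: "real \<Rightarrow> 'a::{banach,second_countable_topology}"
  shows "(LINT x:{a..b}|lborel. f (2 * x)) = (1/2) *\<^sub>R (LINT x:{2*a..2*b}|lborel. f x)"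
proof -
  have "(LINT x:{2*a..2*b}|lborel. f x) = integral\<^sup>L lborel (\<lambda>x. indicator {2*a..2*b} x *\<^sub>R f x)"
    by (simp add: set_lebesgue_integral_def)
  also have "\<dots> = \<bar>2\<bar> *\<^sub>R integral\<^sup>L lborel (\<lambda>x. indicator {2*a..2*b} (0 + 2 * x) *\<^sub>R f (0 + 2 * x))"
    by (rule lborel_integral_real_affine) simp
  also have "(\<lambda>x. indicator {2*a..2*b} (0 + 2 * x) *\<^sub>R f (0 + 2 * x)) = (\<lambda>x::real. indicator {a..b} x *\<^sub>R f (2 * x))"
    by (auto simp: fun_eq_iff split: split_indicator)
  finally show ?thesis by (simp add: set_lebesgue_integral_def)
qed

lemma lint_shift:
  fixes f :: "real \<Rightarrow> 'a::{banach,second_countable_topology}"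
  shows "(LINT x:{a..b}|lborel. f (x + c)) = (LINT x:{a+c..b+c}|lborel. f x)"
proof -
  have "(LINT x:{a+c..b+c}|lborel. f x) = integral\<^sup>L lborel (\<lambda>x. indicator {a+c..b+c} x *\<^sub>R f x)"
    by (simp add: set_lebesgue_integral_def)
  also have "\<dots> = \<bar>1\<bar> *\<^sub>R integral\<^sup>L lborel (\<lambda>x. indicator {a+c..b+c} (c + 1 * x) *\<^sub>R f (c + 1 * x))"
    by (rule lborel_integral_real_affine) simp
  also have "(\<lambda>x. indicator {a+c..b+c} (c + 1 * x) *\<^sub>R f (c + 1 * x)) = (\<lambda>x::real. indicator {a..b} x *\<^sub>R f (x + c))"
    by (auto simp: fun_eq_iff add.commute split: split_indicator)
  finally show ?thesis by (simp add: set_lebesgue_integral_def)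
qed

lemma lint_split:
  fixes f :: "real \<Rightarrow> 'a::{banach,second_countable_topology}"
  assumes "a \<le> b" "b \<le> c" "bm f"
  shows "(LINT x:{a..c}|lborel. f x) = (LINT x:{a..b}|lborel. f x) + (LINT x:{b..c}|lborel. f x)"
proof -
  have "{a..c} = {a..b} \<union> {b..c}" using assms by auto
  moreover have "(LINT x:{a..b} \<union> {b..c}|lborel. f x) = (LINT x:{a..b}|lborel. f x) + (LINT x:{b..c}|lborel. f x)"
  proof (rule set_integral_Un_AE)
    show "AE x in lborel. \<not> (x \<in> {a..b} \<and> x \<in> {b..c})"
      using AE_lborel_singleton[of b] by eventually_elim auto
  qed (auto intro: bm_set_integrable assms)
  ultimately show ?thesis by simp
qed

lemma lint_per:
  fixes f :: "real \<Rightarrow> 'a::{banach,second_countable_topology}"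
  assumes "per f" "bm f"
  shows "(LINT x:{0..2*pi}|lborel. f x) = (LINT x:{-pi..pi}|lborel. f x)"
proof -
  have "(LINT x:{0..2*pi}|lborel. f x) = (LINT x:{0..pi}|lborel. f x) + (LINT x:{pi..2*pi}|lborel. f x)"
    by (rule lint_split) (auto simp: assms)
  also have "(LINT x:{pi..2*pi}|lborel. f x) = (LINT x:{-pi..0}|lborel. f (x + 2*pi))"
    by (subst lint_shift) simp
  also have "\<dots> = (LINT x:{-pi..0}|lborel. f x)"
    using assms(1) unfolding per_def by simp
  also have "(LINT x:{0..pi}|lborel. f x) + (LINT x:{-pi..0}|lborel. f x) = (LINT x:{-pi..pi}|lborel. f x)"
    by (subst lint_split[of "-pi" 0 pi]) (auto simp: assms)
  finally show ?thesis .
qed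

lemma averaging:
  fixes A W :: "real \<Rightarrow> real"
  assumes bA: "bm A" and bW: "bm W" and pA: "per A" and pW: "per W"
    and sA: "\<And>s. A s + A (s + pi) = 2"
  shows "(LINT k:{-pi..pi}|lborel. A k * W (2 * k)) = (LINT t:{-pi..pi}|lborel. W t)"
proof -
  define g where "g t = A (t / 2) * W t" for t
  have bg: "bm g" unfolding g_def[abs_def] using bA bW by (intro bm_mult) (auto dest: bm_scale[where c="1/2"])
  have bg2: "bm (\<lambda>t. A (t / 2 + pi) * W t)" using bA bW
    by (intro bm_mult) (auto dest: bm_affine[where c="1/2" and d=pi])
  have "(LINT k:{-pi..pi}|lborel. A k * W (2 * k)) = (LINT k:{-pi..pi}|lborel. g (2 * k))"
    unfolding g_def by simp
  also have "\<dots> = (1/2) * (LINT t:{-2*pi..2*pi}|lborel. g t)"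
    by (subst lint_scale2) simp
  also have "(LINT t:{-2*pi..2*pi}|lborel. g t) = (LINT t:{-2*pi..0}|lborel. g t) + (LINT t:{0..2*pi}|lborel. g t)"
    by (rule lint_split) (auto simp: bg)
  also have "(LINT t:{-2*pi..0}|lborel. g t) = (LINT t:{0..2*pi}|lborel. g (t + (-2*pi)))"
    by (subst lint_shift) simp
  also have "\<dots> = (LINT t:{0..2*pi}|lborel. A (t / 2 + pi) * W t)"
  proof -
    have "g (t + (-2*pi)) = A (t / 2 + pi) * W t" for t
    proof -
      have e: "(t + (-2*pi)) / 2 = (t / 2 + pi) - 2 * pi" by (simp add: field_simps)
      have "A ((t + (-2*pi)) / 2) = A (t / 2 + pi)"
        unfolding e by (rule per_minus[OF pA])
      moreover have "W (t + (-2*pi)) = W t" using per_minus[OF pW, of t] by simp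
      ultimately show ?thesis unfolding g_def by simp
    qed
    then show ?thesis by simp
  qed
  also have "(LINT t:{0..2*pi}|lborel. A (t / 2 + pi) * W t) + (LINT t:{0..2*pi}|lborel. g t)
      = (LINT t:{0..2*pi}|lborel. A (t / 2 + pi) * W t + g t)"
    by (rule set_integral_add(2)[symmetric]) (auto intro: bm_set_integrable bg bg2)
  also have "\<dots> = (LINT t:{0..2*pi}|lborel. 2 * W t)"
  proof -
    have "A (t / 2 + pi) * W t + g t = 2 * W t" for t
      using sA[of "t/2"] unfolding g_def by (simp add: algebra_simps flip: distrib_left)
    then show ?thesis by simp
  qed
  also have "(1/2) * (LINT t:{0..2*pi}|lborel. 2 * W t) = (LINT t:{0..2*pi}|lborel. W t)"
    by simp
  also have "\<dots> = (LINT t:{-pi..pi}|lborel. W t)"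
    by (rule lint_per) (auto simp: pW bW)
  finally show ?thesis .
qed


definition supp :: "(int \<Rightarrow> complex) \<Rightarrow> int set" where
  "supp x = {n. x n \<noteq> 0}"

definition cv :: "(int \<Rightarrow> complex) \<Rightarrow> int set \<Rightarrow> (int \<Rightarrow> complex) \<Rightarrow> (int \<Rightarrow> complex)" where
  "cv a S x = (\<lambda>n. \<Sum>j\<in>S. a j * x (n - j))"

lemma filt_ft_tp: "filt_ft x = tp x (supp x)"
  unfolding filt_ft_def[abs_def] tp_def[abs_def] supp_def by simp

lemma tp_superset:
  assumes "finite A" "supp x \<subseteq> A"
  shows "tp x A k = filt_ft x k"
  unfolding filt_ft_tp tp_def
  by (rule sum.mono_neutral_right) (use assms in \<open>auto simp: supp_def\<close>)

lemma mult_tp: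
  assumes "finite S" "\<And>k. \<theta> k = tp a S k"
  shows "mult \<theta> x = cv a S x"
proof (rule ext)
  fix n
  have th: "\<theta> = tp a S" using assms(2) by auto
  have "mult \<theta> x n = (\<Sum>\<^sub>\<infinity>j. (if j \<in> S then a j else 0) * x (n - j))"
    unfolding mult_def th by (simp add: fc_tp assms(1))
  also have "\<dots> = (\<Sum>\<^sub>\<infinity>j\<in>S. (if j \<in> S then a j else 0) * x (n - j))"
    by (rule infsum_cong_neutral) auto
  also have "\<dots> = (\<Sum>j\<in>S. a j * x (n - j))"
    using assms(1) by (simp cong: sum.cong)
  finally show "mult \<theta> x n = cv a S x n" unfolding cv_def .
qed

lemma mult_filt: "finite (supp h) \<Longrightarrow> mult (filt_ft h) x = cv h (supp h) x"
  by (rule mult_tp) (auto simp: filt_ft_tp)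

definition wseq :: "(int \<Rightarrow> complex) \<Rightarrow> int \<Rightarrow> complex" where
  "wseq h j = cnj (h (- j - 1)) * exp (\<i> * of_int (- j - 1) * of_real pi)"

definition wsupp :: "(int \<Rightarrow> complex) \<Rightarrow> int set" where
  "wsupp h = (\<lambda>n. - n - 1) ` supp h"

lemma wav_ft_tp:
  shows "wav_ft h k = tp (wseq h) (wsupp h) k"
proof -
  have inj: "inj_on (\<lambda>n::int. - n - 1) (supp h)" by (auto simp: inj_on_def)
  have "tp (wseq h) (wsupp h) k = (\<Sum>n\<in>supp h. wseq h (- n - 1) * exp (- \<i> * of_int (- n - 1) * of_real k))"
    unfolding tp_def wsupp_def by (simp add: sum.reindex[OF inj])
  also have "\<dots> = (\<Sum>n\<in>supp h. exp (\<i> * of_real k) * (cnj (h n) * exp (\<i> * of_int n * of_real (k + pi))))"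
  proof (rule sum.cong[OF refl])
    fix n
    have "exp (\<i> * of_int n * of_real pi) * exp (- \<i> * of_int (- n - 1) * of_real k)
        = exp (\<i> * of_int n * of_real pi + - \<i> * of_int (- n - 1) * of_real k)"
      by (rule exp_add[symmetric])
    also have "\<i> * of_int n * of_real pi + - \<i> * of_int (- n - 1) * of_real k = \<i> * of_real k + \<i> * of_int n * of_real (k + pi)"
      by (simp add: algebra_simps)
    also have "exp \<dots> = exp (\<i> * of_real k) * exp (\<i> * of_int n * of_real (k + pi))"
      by (rule exp_add)
    finally show "wseq h (- n - 1) * exp (- \<i> * of_int (- n - 1) * of_real k) = exp (\<i> * of_real k) * (cnj (h n) * exp (\<i> * of_int n * of_real (k + pi)))"
      unfolding wseq_def by (simp add: algebra_simps)
  qed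
  also have "\<dots> = wav_ft h k"
    unfolding wav_ft_def filt_ft_tp tp_def by (simp add: sum_distrib_left exp_cnj)
  finally show ?thesis by simp
qed

lemma finite_wsupp: "finite (supp h) \<Longrightarrow> finite (wsupp h)"
  unfolding wsupp_def by simp

lemma mult_wav: "finite (supp h) \<Longrightarrow> mult (wav_ft h) x = cv (wseq h) (wsupp h) x"
  by (rule mult_tp) (auto simp: wav_ft_tp finite_wsupp)

lemma supp_cv:
  assumes "finite S" "finite (supp x)"
  shows "finite (supp (cv a S x))" "supp (cv a S x) \<subseteq> (\<lambda>(j, m). j + m) ` (S \<times> supp x)"
proof -
  show sub: "supp (cv a S x) \<subseteq> (\<lambda>(j, m). j + m) ` (S \<times> supp x)"
  proof
    fix n assume "n \<in> supp (cv a S x)"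
    then have "(\<Sum>j\<in>S. a j * x (n - j)) \<noteq> 0" unfolding supp_def cv_def by simp
    then obtain j where "j \<in> S" "a j * x (n - j) \<noteq> 0" by (meson sum.neutral)
    then have "j \<in> S" "n - j \<in> supp x" by (auto simp: supp_def)
    then show "n \<in> (\<lambda>(j, m). j + m) ` (S \<times> supp x)"
      by (intro image_eqI[of _ _ "(j, n - j)"]) auto
  qed
  show "finite (supp (cv a S x))"
    by (rule finite_subset[OF sub]) (use assms in auto)
qed

lemma exp_split_int: "exp (- \<i> * of_int n * of_real k) = exp (- \<i> * of_int j * of_real k) * exp (- \<i> * of_int (n - j) * of_real k)"
proof -
  have "exp (- \<i> * of_int j * of_real k) * exp (- \<i> * of_int (n - j) * of_real k)
       = exp (- \<i> * of_int j * of_real k + - \<i> * of_int (n - j) * of_real k)" by (rule exp_add[symmetric])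
  also have "- \<i> * of_int j * of_real k + - \<i> * of_int (n - j) * of_real k = - \<i> * of_int n * of_real k"
    by (simp add: algebra_simps)
  finally show ?thesis by simp
qed

lemma ft_cv:
  assumes S: "finite S" and X: "finite (supp x)"
  shows "filt_ft (cv a S x) k = tp a S k * filt_ft x k"
proof -
  define B where "B = (\<lambda>(j, m). j + m) ` (S \<times> supp x)"
  have fB: "finite B" unfolding B_def using S X by simp
  have "filt_ft (cv a S x) k = tp (cv a S x) B k"
    by (rule tp_superset[symmetric]) (use fB supp_cv[OF S X] in \<open>auto simp: B_def\<close>)
  also have "\<dots> = (\<Sum>n\<in>B. \<Sum>j\<in>S. a j * exp (- \<i> * of_int j * of_real k) * (x (n - j) * exp (- \<i> * of_int (n - j) * of_real k)))"
    unfolding tp_def cv_def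
  proof (intro sum.cong refl)
    fix n
    show "(\<Sum>j\<in>S. a j * x (n - j)) * exp (- \<i> * of_int n * of_real k) =
          (\<Sum>j\<in>S. a j * exp (- \<i> * of_int j * of_real k) * (x (n - j) * exp (- \<i> * of_int (n - j) * of_real k)))"
      unfolding sum_distrib_right
    proof (intro sum.cong refl)
      fix j
      show "a j * x (n - j) * exp (- \<i> * of_int n * of_real k) =
            a j * exp (- \<i> * of_int j * of_real k) * (x (n - j) * exp (- \<i> * of_int (n - j) * of_real k))"
        by (subst exp_split_int[where j=j]) (simp add: algebra_simps)
    qed
  qed
  also have "\<dots> = (\<Sum>j\<in>S. a j * exp (- \<i> * of_int j * of_real k) * (\<Sum>n\<in>B. x (n - j) * exp (- \<i> * of_int (n - j) * of_real k)))"
    by (simp add: sum.swap[of _ B] sum_distrib_left)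
  also have "\<dots> = (\<Sum>j\<in>S. a j * exp (- \<i> * of_int j * of_real k) * filt_ft x k)"
  proof (rule sum.cong[OF refl])
    fix j assume j: "j \<in> S"
    have inj: "inj_on (\<lambda>n. n - j) B" by (auto simp: inj_on_def)
    have "(\<Sum>n\<in>B. x (n - j) * exp (- \<i> * of_int (n - j) * of_real k)) = tp x ((\<lambda>n. n - j) ` B) k"
      unfolding tp_def by (simp add: sum.reindex[OF inj])
    also have "\<dots> = filt_ft x k"
    proof (rule tp_superset)
      show "supp x \<subseteq> (\<lambda>n. n - j) ` B"
      proof
        fix m assume "m \<in> supp x"
        then have "j + m \<in> B" unfolding B_def using j by auto
        then show "m \<in> (\<lambda>n. n - j) ` B" by (intro image_eqI[of _ _ "j + m"]) auto
      qed
    qed (use fB in simp)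
    finally show "a j * exp (- \<i> * of_int j * of_real k) * (\<Sum>n\<in>B. x (n - j) * exp (- \<i> * of_int (n - j) * of_real k)) = a j * exp (- \<i> * of_int j * of_real k) * filt_ft x k"
      by simp
  qed
  also have "\<dots> = tp a S k * filt_ft x k"
    unfolding tp_def by (simp add: sum_distrib_right)
  finally show ?thesis .
qed

lemma supp_up: "supp (up x) = (\<lambda>m. 2 * m) ` supp x"
  unfolding supp_def up_def by (auto elim!: evenE)

lemma ft_up: "filt_ft (up x) k = filt_ft x (2 * k)"
proof -
  have inj: "inj_on (\<lambda>m::int. 2 * m) (supp x)" by (auto simp: inj_on_def)
  show ?thesis
    unfolding filt_ft_tp tp_def supp_up sum.reindex[OF inj]
    by (intro sum.cong refl) (simp add: up_def algebra_simps)
qed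

lemma fc_filt: "finite (supp x) \<Longrightarrow> fcoeff (filt_ft x) n = x n"
  unfolding filt_ft_tp by (simp add: fc_tp) (simp add: supp_def)

lemma mult_fin:
  assumes "bm \<theta>" "finite (supp u)"
  shows "mult \<theta> u n = fcoeff (\<lambda>k. \<theta> k * filt_ft u k) n"
proof -
  have inj: "inj_on (\<lambda>m. n - m) (supp u)" by (auto simp: inj_on_def)
  have "mult \<theta> u n = (\<Sum>\<^sub>\<infinity>j\<in>(\<lambda>m. n - m) ` supp u. fcoeff \<theta> j * u (n - j))"
    unfolding mult_def
  proof (rule infsum_cong_neutral)
    fix j assume "j \<in> UNIV - (\<lambda>m. n - m) ` supp u"
    then have "u (n - j) = 0" by (auto simp: supp_def image_iff)
    then show "fcoeff \<theta> j * u (n - j) = 0" by simp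
  qed auto
  also have "\<dots> = (\<Sum>j\<in>(\<lambda>m. n - m) ` supp u. fcoeff \<theta> j * u (n - j))"
    using assms(2) by simp
  also have "\<dots> = (\<Sum>m\<in>supp u. u m * fcoeff \<theta> (n - m))"
    by (simp add: sum.reindex[OF inj] mult.commute)
  also have "\<dots> = fcoeff (\<lambda>k. \<theta> k * filt_ft u k) n"
    unfolding filt_ft_tp by (rule fc_tp_mult[symmetric]) (use assms in auto)
  finally show ?thesis .
qed


definition col :: "(int \<Rightarrow> complex) \<Rightarrow> nat \<Rightarrow> (int \<Rightarrow> complex) \<Rightarrow> (int \<Rightarrow> complex)" where
  "col g m x = ((mult (filt_ft g) \<circ> up) ^^ m) (mult (wav_ft g) (up x))"

primrec Pp :: "(int \<Rightarrow> complex) \<Rightarrow> nat \<Rightarrow> real \<Rightarrow> complex" where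
  "Pp g 0 k = 1"
| "Pp g (Suc m) k = filt_ft g k * Pp g m (2 * k)"

lemma Pp_Suc': "Pp g (Suc m) k = Pp g m k * filt_ft g (2 ^ m * k)"
proof (induction m arbitrary: k)
  case 0 then show ?case by simp
next
  case (Suc m)
  have "Pp g (Suc (Suc m)) k = filt_ft g k * (Pp g m (2 * k) * filt_ft g (2 ^ m * (2 * k)))"
    using Suc[of "2 * k"] by simp
  also have "\<dots> = Pp g (Suc m) k * filt_ft g (2 ^ Suc m * k)"
    by (simp add: algebra_simps)
  finally show ?case .
qed

lemma col_Suc: "col g (Suc m) x = mult (filt_ft g) (up (col g m x))"
  unfolding col_def by simp

lemma col_sym:
  assumes g: "finite (supp g)" and x: "finite (supp x)"
  shows "finite (supp (col g m x)) \<and> (\<forall>k. filt_ft (col g m x) k = Pp g m k * wav_ft g (2 ^ m * k) * filt_ft x (2 ^ (m + 1) * k))"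
proof (induction m)
  case 0
  have u: "finite (supp (up x))" using x by (simp add: supp_up)
  have "col g 0 x = cv (wseq h) (wsupp h) (up x)" if "h = g" for h
    unfolding col_def using mult_wav[OF g] that by simp
  then have c: "col g 0 x = cv (wseq g) (wsupp g) (up x)" by simp
  show ?case unfolding c
    using supp_cv(1)[OF finite_wsupp[OF g] u] ft_cv[OF finite_wsupp[OF g] u]
    by (simp add: ft_up wav_ft_tp)
next
  case (Suc m)
  then have f: "finite (supp (up (col g m x)))" by (simp add: supp_up)
  have c: "col g (Suc m) x = cv g (supp g) (up (col g m x))"
    by (simp add: col_Suc mult_filt[OF g])
  show ?case unfolding c
  proof
    show "finite (supp (cv g (supp g) (up (col g m x))))" by (rule supp_cv(1)[OF g f])
    show "\<forall>k. filt_ft (cv g (supp g) (up (col g m x))) k =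
        Pp g (Suc m) k * wav_ft g (2 ^ Suc m * k) * filt_ft x (2 ^ (Suc m + 1) * k)"
    proof
      fix k
      have "filt_ft (cv g (supp g) (up (col g m x))) k = filt_ft g k * filt_ft (col g m x) (2 * k)"
        using ft_cv[OF g f, of g k] by (simp only: ft_up filt_ft_tp[symmetric])
      also have "\<dots> = filt_ft g k * (Pp g m (2 * k) * wav_ft g (2 ^ m * (2 * k)) * filt_ft x (2 ^ (m + 1) * (2 * k)))"
        using Suc by simp
      also have "\<dots> = Pp g (Suc m) k * wav_ft g (2 ^ Suc m * k) * filt_ft x (2 ^ (Suc m + 1) * k)"
        by (simp add: algebra_simps)
      finally show "filt_ft (cv g (supp g) (up (col g m x))) k =
        Pp g (Suc m) k * wav_ft g (2 ^ Suc m * k) * filt_ft x (2 ^ (Suc m + 1) * k)" .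
    qed
  qed
qed

lemma per_nat: "per f \<Longrightarrow> f (x + of_nat n * (2 * pi)) = f x"
proof (induction n)
  case (Suc n)
  have "f (x + of_nat (Suc n) * (2 * pi)) = f ((x + of_nat n * (2 * pi)) + 2 * pi)"
    by (simp add: algebra_simps)
  also have "\<dots> = f (x + of_nat n * (2 * pi))" using Suc.prems unfolding per_def by blast
  finally show ?case using Suc by simp
qed simp

lemma per_pow: assumes "per f" shows "per (\<lambda>t. f (2 ^ q * t))"
  unfolding per_def
proof
  fix x
  have "f (2 ^ q * (x + 2 * pi)) = f (2 ^ q * x + of_nat (2 ^ q) * (2 * pi))"
    by (simp add: algebra_simps)
  also have "\<dots> = f (2 ^ q * x)" by (rule per_nat[OF assms])
  finally show "f (2 ^ q * (x + 2 * pi)) = f (2 ^ q * x)" .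
qed

lemma per_2: "per f \<Longrightarrow> per (\<lambda>t. f (2 * t))"
  using per_pow[of f 1] by simp

lemma per_mult: "per f \<Longrightarrow> per g \<Longrightarrow> per (\<lambda>x. f x * g x)"
  unfolding per_def by simp

lemma per_diff: "per f \<Longrightarrow> per g \<Longrightarrow> per (\<lambda>x. f x - g x)"
  unfolding per_def by simp

lemma per_comp: "per f \<Longrightarrow> per (\<lambda>x. F (f x))"
  unfolding per_def by simp

lemma per_const: "per (\<lambda>x. c)"
  unfolding per_def by simp

lemma per_tp: "per (tp a S)"
  unfolding per_def tp_def
proof (intro allI sum.cong refl)
  fix x n
  have "exp (- \<i> * of_int n * of_real (x + 2 * pi)) = exp (- \<i> * of_int n * of_real x + \<i> * (of_int (- n) * (of_real pi * 2)))"
    by (simp add: algebra_simps)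
  also have "\<dots> = exp (- \<i> * of_int n * of_real x)" by (rule exp_plus_2pin)
  finally show "a n * exp (- \<i> * of_int n * of_real (x + 2 * pi)) = a n * exp (- \<i> * of_int n * of_real x)" by simp
qed

lemma per_filt: "per (filt_ft h)"
  unfolding filt_ft_tp by (rule per_tp)

lemma per_wav: "per (wav_ft h)"
  unfolding wav_ft_tp[abs_def] by (rule per_tp)

lemma per_Pp: "per (Pp g m)"
proof (induction m)
  case 0 then show ?case unfolding per_def by simp
next
  case (Suc m)
  have "per (\<lambda>k. filt_ft g k * Pp g m (2 * k))"
    by (intro per_mult per_filt per_2 Suc)
  then show ?case by simp
qed

lemma bm_filt: "bm (filt_ft h)"
  unfolding filt_ft_tp by (rule bm_tp)

lemma bm_wav: "bm (wav_ft h)"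
  unfolding wav_ft_tp[abs_def] by (rule bm_tp)

lemma bm_Pp: "bm (Pp g m)"
proof (induction m)
  case 0 then show ?case by (simp add: bm_const)
next
  case (Suc m)
  have "bm (\<lambda>k. filt_ft g k * Pp g m (2 * k))"
    by (intro bm_mult bm_filt bm_scale Suc)
  then show ?case by simp
qed

lemma bm_theta: "bm theta_w"
proof -
  have m: "theta_w \<in> borel_measurable borel"
    unfolding theta_w_def Let_def by measurable
  have "cmod (theta_w k) \<le> 1" for k
  proof -
    define k' where "k' = k - 2 * pi * of_int \<lfloor>(k + pi) / (2 * pi)\<rfloor>"
    have "theta_w k = - \<i> * of_real (sgn k') * exp (\<i> * of_real (k' / 2))"
      unfolding theta_w_def k'_def Let_def by simp
    moreover have "cmod (exp (\<i> * of_real (k' / 2))) = 1" by (rule norm_exp_i_times)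
    ultimately show ?thesis by (simp add: norm_mult abs_sgn_eq)
  qed
  then show ?thesis unfolding bm_def using m by auto
qed

lemma theta_norm: "cmod (theta_w k) \<le> 1"
proof -
  define k' where "k' = k - 2 * pi * of_int \<lfloor>(k + pi) / (2 * pi)\<rfloor>"
  have "theta_w k = - \<i> * of_real (sgn k') * exp (\<i> * of_real (k' / 2))"
    unfolding theta_w_def k'_def Let_def by simp
  moreover have "cmod (exp (\<i> * of_real (k' / 2))) = 1" by (rule norm_exp_i_times)
  ultimately show ?thesis by (simp add: norm_mult abs_sgn_eq)
qed

lemma per_theta: "per theta_w"
  unfolding per_def
proof
  fix k :: real
  have "(k + 2 * pi + pi) / (2 * pi) = (k + pi) / (2 * pi) + 1"
    by (simp add: field_simps)
  then have "\<lfloor>(k + 2 * pi + pi) / (2 * pi)\<rfloor> = \<lfloor>(k + pi) / (2 * pi)\<rfloor> + 1" by simp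
  then have e: "k + 2 * pi - 2 * pi * of_int \<lfloor>(k + 2 * pi + pi) / (2 * pi)\<rfloor> = k - 2 * pi * of_int \<lfloor>(k + pi) / (2 * pi)\<rfloor>"
    by (simp add: algebra_simps)
  show "theta_w (k + 2 * pi) = theta_w k"
    by (simp only: theta_w_def Let_def e)
qed


lemma theta_red:
  fixes z :: int
  assumes "of_int z * (2*pi) - pi \<le> k" "k < of_int z * (2*pi) + pi"
  shows "theta_w k = - \<i> * of_real (sgn (k - 2*pi* of_int z)) * cis ((k - 2*pi* of_int z)/2)"
proof -
  have "\<lfloor>(k + pi) / (2 * pi)\<rfloor> = z"
  proof (rule floor_unique)
    show "of_int z \<le> (k + pi) / (2 * pi)" using assms pi_gt_zero by (simp add: field_simps)
    show "(k + pi) / (2 * pi) < of_int z + 1" using assms pi_gt_zero by (simp add: field_simps)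
  qed
  then show ?thesis unfolding theta_w_def Let_def by (simp add: cis_conv_exp)
qed

lemma theta_main:
  assumes "-pi < k" "k < pi"
  shows "theta_w k = - \<i> * of_real (sgn k) * cis (k/2)"
  using theta_red[of 0 k] assms by simp

lemma theta_double:
  assumes k: "-pi < k" "k < pi"
  shows "theta_w (2 * k) = theta_w k * cis (k / 2)"
proof -
  have tk: "theta_w k * cis (k / 2) = - \<i> * of_real (sgn k) * cis k"
  proof -
    have "cis (k / 2) * cis (k / 2) = cis k" by (simp add: cis_mult)
    then show ?thesis using theta_main[OF k] by (simp add: mult.assoc)
  qed
  consider "-pi/2 \<le> k \<and> k < pi/2" | "pi/2 \<le> k" | "k < -pi/2" by linarith
  then show ?thesis
  proof cases
    case 1
    then have "theta_w (2 * k) = - \<i> * of_real (sgn (2 * k)) * cis k"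
      using theta_red[of 0 "2*k"] by simp
    then show ?thesis using tk by (simp add: sgn_mult)
  next
    case 2
    then have "theta_w (2 * k) = - \<i> * of_real (sgn (2 * k - 2 * pi)) * cis ((2 * k - 2 * pi) / 2)"
      using theta_red[of 1 "2*k"] k by simp
    also have "sgn (2 * k - 2 * pi) = -1" using k by simp
    also have "cis ((2 * k - 2 * pi) / 2) = - cis k"
      by (simp add: diff_divide_distrib cis_divide[symmetric] cis_pi)
    moreover have "0 < k" using 2 pi_gt_zero by linarith
    then have "sgn k = 1" by simp
    ultimately show ?thesis using tk by simp
  next
    case 3
    then have "theta_w (2 * k) = - \<i> * of_real (sgn (2 * k - 2 * pi * (-1))) * cis ((2 * k - 2 * pi * (-1)) / 2)"
      using theta_red[of "-1" "2*k"] k by simp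
    also have "sgn (2 * k - 2 * pi * (-1)) = 1" using k by simp
    also have "cis ((2 * k - 2 * pi * (-1)) / 2) = - cis k"
      by (simp add: add_divide_distrib cis_mult[symmetric] cis_pi)
    moreover have "k < 0" using 3 pi_gt_zero by linarith
    then have "sgn k = -1" by simp
    ultimately show ?thesis using tk by simp
  qed
qed

lemma D_bound:
  assumes hyp: "\<forall>k\<in>{-pi<..<pi}. cmod (filt_ft h k - exp (\<i> * of_real (k / 2)) * filt_ft g k) \<le> \<epsilon>"
    and k: "-pi < k" "k < pi" and e: "\<epsilon> \<ge> 0"
  shows "cmod (filt_ft g k * theta_w (2 * k) - theta_w k * filt_ft h k) \<le> \<epsilon>"
proof -
  have "filt_ft g k * theta_w (2 * k) - theta_w k * filt_ft h k = - theta_w k * (filt_ft h k - cis (k / 2) * filt_ft g k)"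
    unfolding theta_double[OF k] by (simp add: algebra_simps)
  then have "cmod (filt_ft g k * theta_w (2 * k) - theta_w k * filt_ft h k) = cmod (theta_w k) * cmod (filt_ft h k - cis (k / 2) * filt_ft g k)"
    by (simp add: norm_mult)
  also have "\<dots> \<le> 1 * \<epsilon>"
    using hyp k by (intro mult_mono theta_norm) (auto simp: cis_conv_exp)
  finally show ?thesis by simp
qed

lemma cmod_swap_cis: "cmod (G - cis (- x) * H) = cmod (H - cis x * G)"
proof -
  have "G - cis (- x) * H = - cis (- x) * (H - cis x * G)"
    by (simp add: algebra_simps cis_mult)
  then show ?thesis by (simp add: norm_mult)
qed

lemma E_bound:
  assumes hyp: "\<forall>k\<in>{-pi<..<pi}. cmod (filt_ft h k - exp (\<i> * of_real (k / 2)) * filt_ft g k) \<le> \<epsilon>"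
    and k: "-pi < k" "k < pi" "k \<noteq> 0"
  shows "cmod (wav_ft g k - theta_w k * wav_ft h k) \<le> \<epsilon>"
proof -
  define k' where "k' = (if 0 < k then k - pi else k + pi)"
  have k': "-pi < k'" "k' < pi" using k unfolding k'_def by auto
  have gk: "filt_ft g (k + pi) = filt_ft g k'" and hk: "filt_ft h (k + pi) = filt_ft h k'"
  proof -
    have "filt_ft f (k + pi) = filt_ft f k'" for f
    proof (cases "0 < k")
      case True
      then have "k + pi = k' + 2 * pi" unfolding k'_def by simp
      then show ?thesis using per_filt[of f] unfolding per_def by metis
    next
      case False
      then show ?thesis unfolding k'_def by simp
    qed
    then show "filt_ft g (k + pi) = filt_ft g k'" "filt_ft h (k + pi) = filt_ft h k'" by auto
  qed
  define c where "c = \<i> * of_real (sgn k) * cis (- k / 2)"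
  have c: "c = cis (- k' / 2)"
  proof (cases "0 < k")
    case True
    then have "- k / 2 = - k' / 2 + - (pi / 2)" unfolding k'_def by (simp add: field_simps)
    then have "cis (- k / 2) = cis (- k' / 2) * cis (- (pi / 2))"
      by (simp only: cis_mult)
    then show ?thesis unfolding c_def using True by (simp add: algebra_simps)
  next
    case False
    then have "k < 0" using k by simp
    then have "- k / 2 = - k' / 2 + pi / 2" unfolding k'_def by (simp add: field_simps)
    then have "cis (- k / 2) = cis (- k' / 2) * cis (pi / 2)"
      by (simp only: cis_mult)
    then show ?thesis unfolding c_def using \<open>k < 0\<close> by (simp add: algebra_simps)
  qed
  have th: "theta_w k = cnj c"
    unfolding theta_main[OF k(1,2)] c_def by (simp add: cis_cnj)
  have "wav_ft g k - theta_w k * wav_ft h k = cis k * cnj (filt_ft g k' - c * filt_ft h k')"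
    unfolding wav_ft_def th gk hk by (simp add: cis_conv_exp algebra_simps)
  then have "cmod (wav_ft g k - theta_w k * wav_ft h k) = cmod (cis k) * cmod (cnj (filt_ft g k' - c * filt_ft h k'))"
    by (simp only: norm_mult)
  also have "\<dots> = cmod (filt_ft g k' - cis (- k' / 2) * filt_ft h k')"
    by (simp only: complex_mod_cnj c norm_cis mult_1)
  also have "\<dots> = cmod (filt_ft h k' - cis (k' / 2) * filt_ft g k')"
    using cmod_swap_cis[of "filt_ft g k'" "k'/2" "filt_ft h k'"] by simp
  also have "\<dots> \<le> \<epsilon>" using hyp k' by (auto simp: cis_conv_exp)
  finally show ?thesis .
qed


definition N :: "(real \<Rightarrow> complex) \<Rightarrow> real" where
  "N \<Phi> = (LINT k:{-pi..pi}|lborel. (cmod (\<Phi> k))\<^sup>2)"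

definition scal :: "(real \<Rightarrow> complex) \<Rightarrow> bool" where
  "scal a \<longleftrightarrow> (\<forall>s. (cmod (a s))\<^sup>2 + (cmod (a (s + pi)))\<^sup>2 = 2)"

lemma bm_sq: "bm \<Psi> \<Longrightarrow> bm (\<lambda>t. (cmod (\<Psi> t))\<^sup>2)"
  by (intro bm_power2 bm_cmod)

lemma per_sq: "per \<Psi> \<Longrightarrow> per (\<lambda>t. (cmod (\<Psi> t))\<^sup>2)"
  by (rule per_comp)

lemma N_avg:
  assumes "bm a" "per a" "scal a" "bm \<Psi>" "per \<Psi>"
  shows "N (\<lambda>k. a k * \<Psi> (2 * k)) = N \<Psi>"
proof -
  have "N (\<lambda>k. a k * \<Psi> (2 * k)) = (LINT k:{-pi..pi}|lborel. (cmod (a k))\<^sup>2 * (cmod (\<Psi> (2 * k)))\<^sup>2)"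
    unfolding N_def by (simp add: norm_mult power_mult_distrib)
  also have "\<dots> = (LINT t:{-pi..pi}|lborel. (cmod (\<Psi> t))\<^sup>2)"
  proof (rule averaging)
    show "bm (\<lambda>k. (cmod (a k))\<^sup>2)" by (rule bm_sq) fact
    show "bm (\<lambda>k. (cmod (\<Psi> k))\<^sup>2)" by (rule bm_sq) fact
    show "per (\<lambda>k. (cmod (a k))\<^sup>2)" by (rule per_sq) fact
    show "per (\<lambda>k. (cmod (\<Psi> k))\<^sup>2)" by (rule per_sq) fact
    show "\<And>s. (cmod (a s))\<^sup>2 + (cmod (a (s + pi)))\<^sup>2 = 2" using assms(3) unfolding scal_def by blast
  qed
  finally show ?thesis unfolding N_def .
qed

lemma N_avg1:
  assumes "bm \<Psi>" "per \<Psi>"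
  shows "N (\<lambda>k. \<Psi> (2 * k)) = N \<Psi>"
  using N_avg[of "\<lambda>_. 1" \<Psi>] assms by (simp add: scal_def per_const)

lemma scal_wav:
  assumes "scal (filt_ft h)" shows "scal (wav_ft h)"
proof -
  have c: "cmod (wav_ft h s) = cmod (filt_ft h (s + pi))" for s
    unfolding wav_ft_def by (simp add: norm_mult norm_exp_i_times)
  have "cmod (filt_ft h (s + pi + pi)) = cmod (filt_ft h s)" for s
    using per_filt[of h] unfolding per_def by (simp add: add.assoc)
  then show ?thesis using assms unfolding scal_def c by (simp add: add.commute)
qed

lemma N_Pp:
  assumes g: "scal (filt_ft g)"
  shows "bm \<Psi> \<Longrightarrow> per \<Psi> \<Longrightarrow> N (\<lambda>k. Pp g j k * \<Psi> (2 ^ j * k)) = N \<Psi>"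
proof (induction j arbitrary: \<Psi>)
  case 0 then show ?case by simp
next
  case (Suc j)
  define \<Psi>' where "\<Psi>' t = filt_ft g t * \<Psi> (2 * t)" for t
  have b: "bm \<Psi>'" unfolding \<Psi>'_def[abs_def] by (intro bm_mult bm_filt bm_scale Suc.prems)
  have p: "per \<Psi>'" unfolding \<Psi>'_def[abs_def] by (intro per_mult per_filt per_2 Suc.prems)
  have "(\<lambda>k. Pp g (Suc j) k * \<Psi> (2 ^ Suc j * k)) = (\<lambda>k. Pp g j k * \<Psi>' (2 ^ j * k))"
    unfolding \<Psi>'_def Pp_Suc' by (simp add: algebra_simps)
  then have "N (\<lambda>k. Pp g (Suc j) k * \<Psi> (2 ^ Suc j * k)) = N \<Psi>'"
    using Suc.IH[OF b p] by simp
  also have "\<dots> = N \<Psi>"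
    unfolding \<Psi>'_def[abs_def] by (rule N_avg) (use g Suc.prems in \<open>auto intro: bm_filt per_filt\<close>)
  finally show ?case .
qed

definition Rf :: "(int \<Rightarrow> complex) \<Rightarrow> (real \<Rightarrow> complex) \<Rightarrow> nat \<Rightarrow> real \<Rightarrow> complex" where
  "Rf h F q t = Pp h q t * wav_ft h (2 ^ q * t) * F (2 ^ (q + 1) * t)"

lemma bm_Rf: "bm F \<Longrightarrow> bm (Rf h F q)"
  unfolding Rf_def[abs_def] by (intro bm_mult bm_Pp bm_wav bm_scale)

lemma per_Rf: "per F \<Longrightarrow> per (Rf h F q)"
  unfolding Rf_def[abs_def] by (intro per_mult per_Pp per_pow per_wav)

lemma N_Rf:
  assumes h: "scal (filt_ft h)" and F: "bm F" "per F"
  shows "N (Rf h F q) = N F"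
proof -
  define \<Psi> where "\<Psi> s = wav_ft h s * F (2 * s)" for s
  have b: "bm \<Psi>" unfolding \<Psi>_def[abs_def] by (intro bm_mult bm_wav bm_scale F)
  have p: "per \<Psi>" unfolding \<Psi>_def[abs_def] by (intro per_mult per_wav per_2 F)
  have "Rf h F q = (\<lambda>t. Pp h q t * \<Psi> (2 ^ q * t))"
    unfolding Rf_def[abs_def] \<Psi>_def by (simp add: algebra_simps)
  then have "N (Rf h F q) = N \<Psi>" using N_Pp[OF h b p] by simp
  also have "\<dots> = N F"
    unfolding \<Psi>_def[abs_def] by (rule N_avg) (use h F in \<open>auto intro: bm_wav per_wav scal_wav\<close>)
  finally show ?thesis .
qed

lemma N_bound:
  assumes D: "bm D" and \<Phi>: "bm \<Phi>" "per \<Phi>" and e: "\<epsilon> \<ge> 0"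
    and Db: "\<And>k. -pi < k \<Longrightarrow> k < pi \<Longrightarrow> k \<noteq> 0 \<Longrightarrow> cmod (D k) \<le> \<epsilon>"
  shows "N (\<lambda>k. D k * \<Phi> (2 * k)) \<le> \<epsilon>\<^sup>2 * N \<Phi>"
proof -
  have "N (\<lambda>k. D k * \<Phi> (2 * k)) = (LINT k:{-pi..pi}|lborel. (cmod (D k))\<^sup>2 * (cmod (\<Phi> (2 * k)))\<^sup>2)"
    unfolding N_def by (simp add: norm_mult power_mult_distrib)
  also have "\<dots> \<le> (LINT k:{-pi..pi}|lborel. \<epsilon>\<^sup>2 * (cmod (\<Phi> (2 * k)))\<^sup>2)"
  proof (rule set_integral_mono_AE)
    show "set_integrable lborel {-pi..pi} (\<lambda>k. (cmod (D k))\<^sup>2 * (cmod (\<Phi> (2 * k)))\<^sup>2)"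
      by (intro bm_set_integrable bm_mult bm_sq D bm_scale[of \<Phi> 2] \<Phi>)
    show "set_integrable lborel {-pi..pi} (\<lambda>k. \<epsilon>\<^sup>2 * (cmod (\<Phi> (2 * k)))\<^sup>2)"
      by (intro bm_set_integrable bm_mult bm_sq bm_const bm_scale[of \<Phi> 2] \<Phi>)
    show "AE k\<in>{-pi..pi} in lborel. (cmod (D k))\<^sup>2 * (cmod (\<Phi> (2 * k)))\<^sup>2 \<le> \<epsilon>\<^sup>2 * (cmod (\<Phi> (2 * k)))\<^sup>2"
      using AE_lborel_singleton[of pi] AE_lborel_singleton[of "-pi"] AE_lborel_singleton[of 0]
    proof eventually_elim
      case (elim k)
      show ?case
      proof
        assume "k \<in> {-pi..pi}"
        then have "-pi < k" "k < pi" "k \<noteq> 0" using elim by auto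
        then have "cmod (D k) \<le> \<epsilon>" by (rule Db)
        then have "(cmod (D k))\<^sup>2 \<le> \<epsilon>\<^sup>2" by (intro power_mono) auto
        then show "(cmod (D k))\<^sup>2 * (cmod (\<Phi> (2 * k)))\<^sup>2 \<le> \<epsilon>\<^sup>2 * (cmod (\<Phi> (2 * k)))\<^sup>2"
          by (intro mult_right_mono) auto
      qed
    qed
  qed
  also have "\<dots> = \<epsilon>\<^sup>2 * N (\<lambda>k. \<Phi> (2 * k))"
    unfolding N_def by simp
  also have "\<dots> = \<epsilon>\<^sup>2 * N \<Phi>" by (simp add: N_avg1 \<Phi>)
  finally show ?thesis .
qed


definition Dg :: "(int \<Rightarrow> complex) \<Rightarrow> (int \<Rightarrow> complex) \<Rightarrow> real \<Rightarrow> complex" where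
  "Dg g h t = filt_ft g t * theta_w (2 * t) - theta_w t * filt_ft h t"

definition Eg :: "(int \<Rightarrow> complex) \<Rightarrow> (int \<Rightarrow> complex) \<Rightarrow> real \<Rightarrow> complex" where
  "Eg g h t = wav_ft g t - theta_w t * wav_ft h t"

definition Psi :: "(int \<Rightarrow> complex) \<Rightarrow> (int \<Rightarrow> complex) \<Rightarrow> (real \<Rightarrow> complex) \<Rightarrow> nat \<Rightarrow> nat \<Rightarrow> real \<Rightarrow> complex" where
  "Psi g h F m j t = (if j < m then Dg g h t * Rf h F (m - 1 - j) (2 * t) else Eg g h t * F (2 * t))"

lemma TEL:
  "theta_w k * Pp h m k = Pp g m k * theta_w (2 ^ m * k)
     - (\<Sum>j<m. Pp g j k * Dg g h (2 ^ j * k) * Pp h (m - 1 - j) (2 ^ (j + 1) * k))"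
proof (induction m arbitrary: k)
  case 0 then show ?case by simp
next
  case (Suc m)
  have IH: "theta_w (2 * k) * Pp h m (2 * k) = Pp g m (2 * k) * theta_w (2 ^ m * (2 * k))
     - (\<Sum>j<m. Pp g j (2 * k) * Dg g h (2 ^ j * (2 * k)) * Pp h (m - 1 - j) (2 ^ (j + 1) * (2 * k)))"
    by (rule Suc.IH)
  have sum: "(\<Sum>j<Suc m. Pp g j k * Dg g h (2 ^ j * k) * Pp h (Suc m - 1 - j) (2 ^ (j + 1) * k))
      = Dg g h k * Pp h m (2 * k) + filt_ft g k * (\<Sum>j<m. Pp g j (2 * k) * Dg g h (2 ^ j * (2 * k)) * Pp h (m - 1 - j) (2 ^ (j + 1) * (2 * k)))"
  proof -
    have "(\<Sum>j<Suc m. Pp g j k * Dg g h (2 ^ j * k) * Pp h (Suc m - 1 - j) (2 ^ (j + 1) * k))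
      = Pp g 0 k * Dg g h (2 ^ 0 * k) * Pp h (Suc m - 1 - 0) (2 ^ (0 + 1) * k)
        + (\<Sum>j<m. Pp g (Suc j) k * Dg g h (2 ^ Suc j * k) * Pp h (Suc m - 1 - Suc j) (2 ^ (Suc j + 1) * k))"
      by (rule sum.lessThan_Suc_shift)
    also have "(\<Sum>j<m. Pp g (Suc j) k * Dg g h (2 ^ Suc j * k) * Pp h (Suc m - 1 - Suc j) (2 ^ (Suc j + 1) * k))
       = filt_ft g k * (\<Sum>j<m. Pp g j (2 * k) * Dg g h (2 ^ j * (2 * k)) * Pp h (m - 1 - j) (2 ^ (j + 1) * (2 * k)))"
      unfolding sum_distrib_left by (intro sum.cong refl) (simp add: algebra_simps)
    finally show ?thesis by simp
  qed
  have "theta_w k * Pp h (Suc m) k = filt_ft g k * (theta_w (2 * k) * Pp h m (2 * k)) - Dg g h k * Pp h m (2 * k)"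
    by (simp add: Dg_def algebra_simps)
  also have "\<dots> = filt_ft g k * (Pp g m (2 * k) * theta_w (2 ^ m * (2 * k))
     - (\<Sum>j<m. Pp g j (2 * k) * Dg g h (2 ^ j * (2 * k)) * Pp h (m - 1 - j) (2 ^ (j + 1) * (2 * k)))) - Dg g h k * Pp h m (2 * k)"
    by (simp only: IH)
  also have "\<dots> = Pp g (Suc m) k * theta_w (2 ^ Suc m * k)
     - (\<Sum>j<Suc m. Pp g j k * Dg g h (2 ^ j * k) * Pp h (Suc m - 1 - j) (2 ^ (j + 1) * k))"
    by (simp only: sum) (simp add: algebra_simps)
  finally show ?case .
qed

lemma pw2: "(2::real) ^ a * (2 * (2 ^ b * k)) = 2 ^ (a + b + 1) * k"
  by (simp add: power_add algebra_simps)

lemma DEC: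
  "Pp g m k * wav_ft g (2 ^ m * k) * F (2 ^ (m + 1) * k) - theta_w k * (Pp h m k * wav_ft h (2 ^ m * k) * F (2 ^ (m + 1) * k))
   = (\<Sum>j<Suc m. Pp g j k * Psi g h F m j (2 ^ j * k))"
proof -
  define W where "W = wav_ft h (2 ^ m * k) * F (2 ^ (m + 1) * k)"
  have A: "Pp g j k * Psi g h F m j (2 ^ j * k) = Pp g j k * Dg g h (2 ^ j * k) * Pp h (m - 1 - j) (2 ^ (j + 1) * k) * W"
    if j: "j < m" for j
  proof -
    obtain q where m: "m = Suc (j + q)" using j less_iff_Suc_add by auto
    have "Rf h F (m - 1 - j) (2 * (2 ^ j * k)) = Pp h (m - 1 - j) (2 ^ (j + 1) * k) * W"
      unfolding Rf_def W_def m by (simp add: power_add algebra_simps)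
    then show ?thesis unfolding Psi_def using j by (simp add: algebra_simps)
  qed
  have B: "Pp g m k * Psi g h F m m (2 ^ m * k) = Pp g m k * (wav_ft g (2 ^ m * k) - theta_w (2 ^ m * k) * wav_ft h (2 ^ m * k)) * F (2 ^ (m + 1) * k)"
    unfolding Psi_def Eg_def by (simp add: algebra_simps)
  have "(\<Sum>j<Suc m. Pp g j k * Psi g h F m j (2 ^ j * k))
      = (\<Sum>j<m. Pp g j k * Dg g h (2 ^ j * k) * Pp h (m - 1 - j) (2 ^ (j + 1) * k)) * W + Pp g m k * Psi g h F m m (2 ^ m * k)"
    by (simp add: A sum_distrib_right)
  also have "\<dots> = (Pp g m k * theta_w (2 ^ m * k) - theta_w k * Pp h m k) * W + Pp g m k * Psi g h F m m (2 ^ m * k)"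
  proof -
    have S: "(\<Sum>j<m. Pp g j k * Dg g h (2 ^ j * k) * Pp h (m - 1 - j) (2 ^ (j + 1) * k)) = Pp g m k * theta_w (2 ^ m * k) - theta_w k * Pp h m k"
      using TEL[of k h m g] by (simp add: algebra_simps)
    show ?thesis by (simp only: S)
  qed
  also have "\<dots> = Pp g m k * wav_ft g (2 ^ m * k) * F (2 ^ (m + 1) * k) - theta_w k * (Pp h m k * wav_ft h (2 ^ m * k) * F (2 ^ (m + 1) * k))"
    unfolding B W_def by (simp add: algebra_simps)
  finally show ?thesis by simp
qed

lemma cmod_sum_sq: "(cmod (\<Sum>j\<in>A. z j))\<^sup>2 \<le> real (card A) * (\<Sum>j\<in>A. (cmod (z j))\<^sup>2)"
proof -
  have "cmod (sum z A) \<le> (\<Sum>j\<in>A. cmod (z j))" by (rule norm_sum)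
  then have "(cmod (sum z A))\<^sup>2 \<le> (\<Sum>j\<in>A. cmod (z j))\<^sup>2" by (intro power_mono) auto
  also have "\<dots> \<le> (\<Sum>j\<in>A. (cmod (z j))\<^sup>2) * real (card A)" by (rule sum_squared_le_sum_of_squares)
  finally show ?thesis by (simp add: mult.commute)
qed

lemma bm_Dg: "bm (Dg g h)"
  unfolding Dg_def[abs_def] by (intro bm_diff bm_mult bm_filt bm_theta bm_scale[of theta_w 2])

lemma bm_Eg: "bm (Eg g h)"
  unfolding Eg_def[abs_def] by (intro bm_diff bm_mult bm_wav bm_theta)

lemma per_Dg: "per (Dg g h)"
  unfolding Dg_def[abs_def] by (intro per_diff per_mult per_filt per_theta per_2[of theta_w])

lemma per_Eg: "per (Eg g h)"
  unfolding Eg_def[abs_def] by (intro per_diff per_mult per_wav per_theta)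

lemma bm_Psi: "bm F \<Longrightarrow> bm (Psi g h F m j)"
  unfolding Psi_def[abs_def]
  by (cases "j < m") (simp_all, (intro bm_mult bm_Dg bm_Eg bm_scale bm_Rf; assumption)+)

lemma per_Psi: "per F \<Longrightarrow> per (Psi g h F m j)"
  unfolding Psi_def[abs_def]
  by (cases "j < m") (simp_all, (intro per_mult per_Dg per_Eg per_2 per_Rf; assumption)+)

lemma G_est:
  assumes g: "scal (filt_ft g)" and h: "scal (filt_ft h)"
    and hyp: "\<forall>k\<in>{-pi<..<pi}. cmod (filt_ft h k - exp (\<i> * of_real (k / 2)) * filt_ft g k) \<le> \<epsilon>"
    and e: "\<epsilon> \<ge> 0" and F: "bm F" "per F"
  shows "N (\<lambda>k. Pp g m k * wav_ft g (2 ^ m * k) * F (2 ^ (m + 1) * k) - theta_w k * (Pp h m k * wav_ft h (2 ^ m * k) * F (2 ^ (m + 1) * k)))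
         \<le> (real (Suc m))\<^sup>2 * \<epsilon>\<^sup>2 * N F"
proof -
  define T where "T j k = Pp g j k * Psi g h F m j (2 ^ j * k)" for j k
  have bT: "bm (T j)" for j unfolding T_def[abs_def] by (intro bm_mult bm_Pp bm_scale bm_Psi F)
  have NT: "N (T j) \<le> \<epsilon>\<^sup>2 * N F" if j: "j < Suc m" for j
  proof -
    have "N (T j) = N (Psi g h F m j)"
      unfolding T_def[abs_def] by (rule N_Pp[OF g]) (auto intro: bm_Psi per_Psi F)
    also have "\<dots> \<le> \<epsilon>\<^sup>2 * N F"
    proof (cases "j < m")
      case True
      then have "Psi g h F m j = (\<lambda>t. Dg g h t * Rf h F (m - 1 - j) (2 * t))"
        unfolding Psi_def by auto
      moreover have "N (\<lambda>t. Dg g h t * Rf h F (m - 1 - j) (2 * t)) \<le> \<epsilon>\<^sup>2 * N (Rf h F (m - 1 - j))"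
        by (rule N_bound) (auto intro: bm_Dg bm_Rf per_Rf F e D_bound[OF hyp _ _ e, unfolded Dg_def[symmetric]])
      ultimately show ?thesis by (simp add: N_Rf[OF h F])
    next
      case False
      then have "Psi g h F m j = (\<lambda>t. Eg g h t * F (2 * t))"
        unfolding Psi_def by auto
      moreover have "N (\<lambda>t. Eg g h t * F (2 * t)) \<le> \<epsilon>\<^sup>2 * N F"
        by (rule N_bound) (auto intro: bm_Eg F e E_bound[OF hyp, unfolded Eg_def[symmetric]])
      ultimately show ?thesis by simp
    qed
    finally show ?thesis .
  qed
  have "N (\<lambda>k. Pp g m k * wav_ft g (2 ^ m * k) * F (2 ^ (m + 1) * k) - theta_w k * (Pp h m k * wav_ft h (2 ^ m * k) * F (2 ^ (m + 1) * k)))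
      = N (\<lambda>k. \<Sum>j<Suc m. T j k)"
    unfolding DEC T_def by simp
  also have "\<dots> \<le> (LINT k:{-pi..pi}|lborel. real (Suc m) * (\<Sum>j<Suc m. (cmod (T j k))\<^sup>2))"
    unfolding N_def
  proof (rule set_integral_mono)
    show "set_integrable lborel {-pi..pi} (\<lambda>k. (cmod (\<Sum>j<Suc m. T j k))\<^sup>2)"
      by (intro bm_set_integrable bm_sq bm_sum bT)
    show "set_integrable lborel {-pi..pi} (\<lambda>k. real (Suc m) * (\<Sum>j<Suc m. (cmod (T j k))\<^sup>2))"
      by (intro bm_set_integrable bm_mult bm_const bm_sum bm_sq bT)
    show "(cmod (\<Sum>j<Suc m. T j k))\<^sup>2 \<le> real (Suc m) * (\<Sum>j<Suc m. (cmod (T j k))\<^sup>2)" for k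
      using cmod_sum_sq[of "\<lambda>j. T j k" "{..<Suc m}"] by simp
  qed
  also have "\<dots> = real (Suc m) * (\<Sum>j<Suc m. N (T j))"
    unfolding N_def set_integral_mult_right by (subst set_integral_sum') (auto intro: bm_set_integrable bm_sq bT)
  also have "\<dots> \<le> real (Suc m) * (\<Sum>j<Suc m. \<epsilon>\<^sup>2 * N F)"
    by (intro mult_left_mono sum_mono NT) auto
  also have "\<dots> = (real (Suc m))\<^sup>2 * \<epsilon>\<^sup>2 * N F"
    by (simp add: power2_eq_square)
  finally show ?thesis .
qed


definition nrm :: "(int \<Rightarrow> complex) \<Rightarrow> real" where
  "nrm x = (\<Sum>\<^sub>\<infinity>n. (cmod (x n))\<^sup>2)"

definition l2 :: "(int \<Rightarrow> complex) \<Rightarrow> bool" where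
  "l2 x \<longleftrightarrow> (\<lambda>n. (cmod (x n))\<^sup>2) summable_on UNIV"

lemma nrm_nonneg: "nrm x \<ge> 0"
  unfolding nrm_def by (rule infsum_nonneg) simp

lemma summable_finsum:
  fixes f :: "'i \<Rightarrow> 'a \<Rightarrow> real"
  assumes "finite S" "\<And>j. j \<in> S \<Longrightarrow> f j summable_on A"
  shows "(\<lambda>n. \<Sum>j\<in>S. f j n) summable_on A \<and> (\<Sum>\<^sub>\<infinity>n\<in>A. \<Sum>j\<in>S. f j n) = (\<Sum>j\<in>S. \<Sum>\<^sub>\<infinity>n\<in>A. f j n)"
  using assms
proof (induction S rule: finite_induct)
  case empty then show ?case by simp
next
  case (insert i S)
  then have IH: "(\<lambda>n. \<Sum>j\<in>S. f j n) summable_on A" "(\<Sum>\<^sub>\<infinity>n\<in>A. \<Sum>j\<in>S. f j n) = (\<Sum>j\<in>S. \<Sum>\<^sub>\<infinity>n\<in>A. f j n)"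
    by auto
  have fi: "f i summable_on A" using insert by auto
  show ?case using insert.hyps IH fi
    by (simp add: summable_on_add infsum_add)
qed

lemma l2_shift:
  assumes "l2 x"
  shows "(\<lambda>j. (cmod (x (n - j)))\<^sup>2) summable_on UNIV" "(\<Sum>\<^sub>\<infinity>j. (cmod (x (n - j)))\<^sup>2) = nrm x"
proof -
  have b: "bij_betw (\<lambda>j::int. n - j) UNIV UNIV"
    by (rule bij_betwI[of _ _ _ "\<lambda>j. n - j"]) auto
  show "(\<lambda>j. (cmod (x (n - j)))\<^sup>2) summable_on UNIV"
    using summable_on_reindex_bij_betw[OF b, of "\<lambda>m. (cmod (x m))\<^sup>2"] assms unfolding l2_def by simp
  show "(\<Sum>\<^sub>\<infinity>j. (cmod (x (n - j)))\<^sup>2) = nrm x"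
    using infsum_reindex_bij_betw[OF b, of "\<lambda>m. (cmod (x m))\<^sup>2"] unfolding nrm_def by simp
qed

lemma sq_diff_le: "(cmod (a - b))\<^sup>2 \<le> 2 * (cmod a)\<^sup>2 + 2 * (cmod b)\<^sup>2"
proof -
  have "cmod (a - b) \<le> cmod a + cmod b" by (rule norm_triangle_ineq4)
  then have "(cmod (a - b))\<^sup>2 \<le> (cmod a + cmod b)\<^sup>2" by (intro power_mono) auto
  also have "\<dots> \<le> 2 * (cmod a)\<^sup>2 + 2 * (cmod b)\<^sup>2"
  proof -
    have "0 \<le> (cmod a - cmod b)\<^sup>2" by simp
    then show ?thesis by (simp add: power2_eq_square algebra_simps)
  qed
  finally show ?thesis .
qed

lemma l2_diff:
  assumes "l2 x" "l2 y" shows "l2 (\<lambda>n. x n - y n)"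
  unfolding l2_def
proof (rule summable_on_comparison_test)
  show "(\<lambda>n. 2 * (cmod (x n))\<^sup>2 + 2 * (cmod (y n))\<^sup>2) summable_on UNIV"
    using assms unfolding l2_def by (intro summable_on_add summable_on_cmult_right)
qed (auto intro: sq_diff_le)

lemma l2_zero: "l2 (\<lambda>n. 0)"
  unfolding l2_def by simp

definition bop :: "((int \<Rightarrow> complex) \<Rightarrow> (int \<Rightarrow> complex)) \<Rightarrow> real \<Rightarrow> bool" where
  "bop \<Phi> M \<longleftrightarrow> M \<ge> 0 \<and> (\<forall>x. l2 x \<longrightarrow> l2 (\<Phi> x) \<and> nrm (\<Phi> x) \<le> M * nrm x)
      \<and> (\<forall>x y. \<Phi> (\<lambda>i. x i - y i) = (\<lambda>n. \<Phi> x n - \<Phi> y n))"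

lemma bop_comp:
  assumes "bop \<Phi> M" "bop \<Psi> M'" shows "bop (\<Phi> \<circ> \<Psi>) (M * M')"
  unfolding bop_def
proof (intro conjI allI impI)
  show "0 \<le> M * M'" using assms unfolding bop_def by auto
  fix x assume x: "l2 x"
  then have "l2 (\<Psi> x)" "nrm (\<Psi> x) \<le> M' * nrm x" using assms(2) unfolding bop_def by auto
  then show "l2 ((\<Phi> \<circ> \<Psi>) x)" using assms(1) unfolding bop_def by auto
  have "nrm (\<Phi> (\<Psi> x)) \<le> M * nrm (\<Psi> x)" using assms(1) \<open>l2 (\<Psi> x)\<close> unfolding bop_def by auto
  also have "\<dots> \<le> M * (M' * nrm x)"
    using \<open>nrm (\<Psi> x) \<le> M' * nrm x\<close> assms(1) unfolding bop_def by (intro mult_left_mono) auto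
  finally show "nrm ((\<Phi> \<circ> \<Psi>) x) \<le> M * M' * nrm x" by (simp add: mult.assoc)
next
  fix x y
  show "(\<Phi> \<circ> \<Psi>) (\<lambda>i. x i - y i) = (\<lambda>n. (\<Phi> \<circ> \<Psi>) x n - (\<Phi> \<circ> \<Psi>) y n)"
    using assms unfolding bop_def by simp
qed

lemma bop_id: "bop id 1"
  unfolding bop_def by auto

lemma bop_funpow: "bop \<Phi> M \<Longrightarrow> bop (\<Phi> ^^ m) (M ^ m)"
proof (induction m)
  case 0 then show ?case using bop_id by (simp add: id_def)
next
  case (Suc m)
  then have "bop (\<Phi> \<circ> \<Phi> ^^ m) (M * M ^ m)" by (intro bop_comp) auto
  then show ?case by (simp only: funpow.simps power_Suc)
qed

lemma cv_pointwise:
  assumes "finite S"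
  shows "(cmod (cv a S x n))\<^sup>2 \<le> real (card S) * (\<Sum>j\<in>S. (cmod (a j))\<^sup>2 * (cmod (x (n - j)))\<^sup>2)"
  unfolding cv_def using cmod_sum_sq[of "\<lambda>j. a j * x (n - j)" S]
  by (simp add: norm_mult power_mult_distrib)

lemma bop_cv:
  assumes S: "finite S"
  shows "bop (cv a S) (real (card S) * (\<Sum>j\<in>S. (cmod (a j))\<^sup>2))"
  unfolding bop_def
proof (intro conjI allI impI)
  show "0 \<le> real (card S) * (\<Sum>j\<in>S. (cmod (a j))\<^sup>2)" by (intro mult_nonneg_nonneg sum_nonneg) auto
  fix x assume x: "l2 x"
  define B where "B n = real (card S) * (\<Sum>j\<in>S. (cmod (a j))\<^sup>2 * (cmod (x (n - j)))\<^sup>2)" for n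
  have fs: "(\<lambda>n. \<Sum>j\<in>S. (cmod (a j))\<^sup>2 * (cmod (x (n - j)))\<^sup>2) summable_on UNIV \<and>
      (\<Sum>\<^sub>\<infinity>n. \<Sum>j\<in>S. (cmod (a j))\<^sup>2 * (cmod (x (n - j)))\<^sup>2) = (\<Sum>j\<in>S. \<Sum>\<^sub>\<infinity>n. (cmod (a j))\<^sup>2 * (cmod (x (n - j)))\<^sup>2)"
  proof (rule summable_finsum[OF S])
    fix j
    have b: "bij_betw (\<lambda>n::int. n - j) UNIV UNIV"
      by (rule bij_betwI[of _ _ _ "\<lambda>n. n + j"]) auto
    have "(\<lambda>n. (cmod (x (n - j)))\<^sup>2) summable_on UNIV"
      using summable_on_reindex_bij_betw[OF b, of "\<lambda>m. (cmod (x m))\<^sup>2"] x unfolding l2_def by simp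
    then show "(\<lambda>n. (cmod (a j))\<^sup>2 * (cmod (x (n - j)))\<^sup>2) summable_on UNIV"
      by (rule summable_on_cmult_right)
  qed
  have inner: "(\<Sum>\<^sub>\<infinity>n. (cmod (a j))\<^sup>2 * (cmod (x (n - j)))\<^sup>2) = (cmod (a j))\<^sup>2 * nrm x" for j
  proof -
    have b: "bij_betw (\<lambda>n::int. n - j) UNIV UNIV"
      by (rule bij_betwI[of _ _ _ "\<lambda>n. n + j"]) auto
    have "(\<Sum>\<^sub>\<infinity>n. (cmod (x (n - j)))\<^sup>2) = nrm x"
      using infsum_reindex_bij_betw[OF b, of "\<lambda>m. (cmod (x m))\<^sup>2"] unfolding nrm_def by simp
    then show ?thesis by (simp add: infsum_cmult_right')
  qed
  have Bs: "B summable_on UNIV" unfolding B_def[abs_def] using fs by (intro summable_on_cmult_right) auto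
  show "l2 (cv a S x)"
    unfolding l2_def by (rule summable_on_comparison_test[OF Bs]) (auto simp: B_def cv_pointwise S)
  then have "nrm (cv a S x) \<le> (\<Sum>\<^sub>\<infinity>n. B n)"
    unfolding nrm_def l2_def by (intro infsum_mono Bs) (auto simp: B_def cv_pointwise S)
  also have "\<dots> = real (card S) * (\<Sum>j\<in>S. \<Sum>\<^sub>\<infinity>n. (cmod (a j))\<^sup>2 * (cmod (x (n - j)))\<^sup>2)"
    unfolding B_def using fs by (simp only: infsum_cmult_right')
  also have "\<dots> = real (card S) * (\<Sum>j\<in>S. (cmod (a j))\<^sup>2) * nrm x"
    by (simp only: inner sum_distrib_right mult.assoc)
  finally show "nrm (cv a S x) \<le> real (card S) * (\<Sum>j\<in>S. (cmod (a j))\<^sup>2) * nrm x" .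
next
  fix x y
  show "cv a S (\<lambda>i. x i - y i) = (\<lambda>n. cv a S x n - cv a S y n)"
    unfolding cv_def by (simp add: right_diff_distrib sum_subtractf)
qed

lemma up_sq_summable:
  fixes w :: "int \<Rightarrow> real"
  assumes "\<And>n. w n \<ge> 0"
  shows "(\<lambda>n. if even n then w (n div 2) else 0) summable_on UNIV \<longleftrightarrow> w summable_on UNIV"
    "(\<Sum>\<^sub>\<infinity>n. if even n then w (n div 2) else 0) = (\<Sum>\<^sub>\<infinity>n. w n)"
proof -
  have inj: "inj_on (\<lambda>m::int. 2 * m) UNIV" by (auto simp: inj_on_def)
  have c1: "(\<lambda>n. if even n then w (n div 2) else 0) summable_on UNIV \<longleftrightarrow>
            (\<lambda>n. if even n then w (n div 2) else 0) summable_on range (\<lambda>m::int. 2 * m)"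
    by (rule summable_on_cong_neutral) (auto elim!: evenE)
  have c2: "(\<Sum>\<^sub>\<infinity>n. if even n then w (n div 2) else 0) =
            (\<Sum>\<^sub>\<infinity>n\<in>range (\<lambda>m::int. 2 * m). if even n then w (n div 2) else 0)"
    by (rule infsum_cong_neutral) (auto elim!: evenE)
  show "(\<lambda>n. if even n then w (n div 2) else 0) summable_on UNIV \<longleftrightarrow> w summable_on UNIV"
    unfolding c1 summable_on_reindex[OF inj] by (simp add: o_def)
  show "(\<Sum>\<^sub>\<infinity>n. if even n then w (n div 2) else 0) = (\<Sum>\<^sub>\<infinity>n. w n)"
    unfolding c2 infsum_reindex[OF inj] by (simp add: o_def)
qed

lemma bop_up: "bop up 1"
  unfolding bop_def
proof (intro conjI allI impI)
  fix x assume x: "l2 x"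
  have e: "(\<lambda>n. (cmod (up x n))\<^sup>2) = (\<lambda>n. if even n then (cmod (x (n div 2)))\<^sup>2 else 0)"
    unfolding up_def by auto
  show "l2 (up x)" unfolding l2_def e using x up_sq_summable(1)[of "\<lambda>m. (cmod (x m))\<^sup>2"] unfolding l2_def by simp
  show "nrm (up x) \<le> 1 * nrm x" unfolding nrm_def e using up_sq_summable(2)[of "\<lambda>m. (cmod (x m))\<^sup>2"] by simp
next
  fix x y
  show "up (\<lambda>i. x i - y i) = (\<lambda>n. up x n - up y n)" unfolding up_def by auto
qed auto

lemma col_eq: "finite (supp g) \<Longrightarrow> col g m = ((cv g (supp g) \<circ> up) ^^ m) \<circ> cv (wseq g) (wsupp g) \<circ> up"
proof -
  assume g: "finite (supp g)"
  have a: "mult (filt_ft g) = cv g (supp g)" by (rule ext) (rule mult_filt[OF g])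
  have b: "mult (wav_ft g) = cv (wseq g) (wsupp g)" by (rule ext) (rule mult_wav[OF g])
  show ?thesis unfolding col_def[abs_def] a b by (simp add: fun_eq_iff)
qed

lemma bop_col: assumes g: "finite (supp g)" shows "\<exists>M. bop (col g m) M"
proof -
  obtain M1 where 1: "bop (cv g (supp g)) M1" using bop_cv[OF g] by blast
  obtain M2 where 2: "bop (cv (wseq g) (wsupp g)) M2" using bop_cv[OF finite_wsupp[OF g]] by blast
  have "bop (((cv g (supp g) \<circ> up) ^^ m) \<circ> cv (wseq g) (wsupp g) \<circ> up) (((M1 * 1) ^ m * M2) * 1)"
    by (rule bop_comp[OF bop_comp[OF bop_funpow[OF bop_comp[OF 1 bop_up]] 2] bop_up])
  then show ?thesis unfolding col_eq[OF g] by blast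
qed


definition loc :: "((int \<Rightarrow> complex) \<Rightarrow> (int \<Rightarrow> complex)) \<Rightarrow> bool" where
  "loc \<Phi> \<longleftrightarrow> (\<forall>n. \<exists>K. finite K \<and> (\<forall>x y. (\<forall>i\<in>K. x i = y i) \<longrightarrow> \<Phi> x n = \<Phi> y n))"

lemma loc_cv: "finite S \<Longrightarrow> loc (cv a S)"
  unfolding loc_def
proof (intro allI)
  fix n assume S: "finite S"
  show "\<exists>K. finite K \<and> (\<forall>x y. (\<forall>i\<in>K. x i = y i) \<longrightarrow> cv a S x n = cv a S y n)"
    by (rule exI[of _ "(\<lambda>j. n - j) ` S"]) (auto simp: S cv_def intro!: sum.cong)
qed

lemma loc_up: "loc up"
  unfolding loc_def
proof
  fix n :: int
  show "\<exists>K. finite K \<and> (\<forall>x y. (\<forall>i\<in>K. x i = y i) \<longrightarrow> up x n = up y n)"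
    by (rule exI[of _ "{n div 2}"]) (simp add: up_def)
qed

lemma loc_comp:
  assumes "loc \<Phi>" "loc \<Psi>" shows "loc (\<Phi> \<circ> \<Psi>)"
  unfolding loc_def
proof
  fix n
  obtain K where K: "finite K" "\<And>(x::int\<Rightarrow>complex) y. (\<forall>i\<in>K. x i = y i) \<Longrightarrow> \<Phi> x n = \<Phi> y n"
    using assms(1) unfolding loc_def by blast
  have "\<forall>i. \<exists>K. finite K \<and> (\<forall>x y. (\<forall>j\<in>K. x j = y j) \<longrightarrow> \<Psi> x i = \<Psi> y i)"
    using assms(2) unfolding loc_def by blast
  then have "\<exists>K2. \<forall>i. finite (K2 i) \<and> (\<forall>x y. (\<forall>j\<in>K2 i. x j = y j) \<longrightarrow> \<Psi> x i = \<Psi> y i)"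
    by (rule choice)
  then obtain K2 where K2': "\<forall>i. finite (K2 i) \<and> (\<forall>x y. (\<forall>j\<in>K2 i. x j = y j) \<longrightarrow> \<Psi> x i = \<Psi> y i)"
    by blast
  have K2: "\<And>i. finite (K2 i)" "\<And>i (x::int\<Rightarrow>complex) y. (\<forall>j\<in>K2 i. x j = y j) \<Longrightarrow> \<Psi> x i = \<Psi> y i"
    using K2' by blast+
  show "\<exists>K'. finite K' \<and> (\<forall>x y. (\<forall>i\<in>K'. x i = y i) \<longrightarrow> (\<Phi> \<circ> \<Psi>) x n = (\<Phi> \<circ> \<Psi>) y n)"
  proof (intro exI conjI allI impI)
    show "finite (\<Union>i\<in>K. K2 i)" using K(1) K2(1) by auto
    fix x y :: "int \<Rightarrow> complex" assume "\<forall>i\<in>(\<Union>i\<in>K. K2 i). x i = y i"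
    then have "\<forall>i\<in>K. \<Psi> x i = \<Psi> y i"
    proof (intro ballI)
      fix i assume "\<forall>i\<in>(\<Union>i\<in>K. K2 i). x i = y i" "i \<in> K"
      then have "\<forall>j\<in>K2 i. x j = y j" by auto
      then show "\<Psi> x i = \<Psi> y i" by (rule K2(2))
    qed
    then show "(\<Phi> \<circ> \<Psi>) x n = (\<Phi> \<circ> \<Psi>) y n" using K(2)[of "\<Psi> x" "\<Psi> y"] by simp
  qed
qed

lemma loc_id: "loc id"
  unfolding loc_def
proof
  fix n :: int
  show "\<exists>K. finite K \<and> (\<forall>x y. (\<forall>i\<in>K. x i = y i) \<longrightarrow> id x n = id y n)"
    by (rule exI[of _ "{n}"]) simp
qed

lemma loc_funpow: "loc \<Phi> \<Longrightarrow> loc (\<Phi> ^^ m)"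
proof (induction m)
  case 0 then show ?case using loc_id by (simp only: funpow.simps)
next
  case (Suc m)
  then have "loc (\<Phi> \<circ> \<Phi> ^^ m)" by (intro loc_comp)
  then show ?case by (simp only: funpow.simps)
qed

lemma loc_col: assumes g: "finite (supp g)" shows "loc (col g m)"
  unfolding col_eq[OF g] by (intro loc_comp loc_funpow loc_cv loc_up finite_wsupp g)


lemma summable_on_cdivide:
  fixes f :: "'a \<Rightarrow> real"
  shows "f summable_on A \<Longrightarrow> (\<lambda>x. f x / d) summable_on A"
  using summable_on_cmult_left[of f A "inverse d"] by (simp add: divide_inverse)

lemma infsum_cdivide:
  fixes f :: "'a \<Rightarrow> real"
  shows "(\<Sum>\<^sub>\<infinity>x\<in>A. f x / d) = (\<Sum>\<^sub>\<infinity>x\<in>A. f x) / d"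
  using infsum_cmult_left'[of f "inverse d" A] by (simp add: divide_inverse)

lemma fin_est:
  assumes g: "finite (supp g)" "scal (filt_ft g)" and h: "finite (supp h)" "scal (filt_ft h)"
    and hyp: "\<forall>k\<in>{-pi<..<pi}. cmod (filt_ft h k - exp (\<i> * of_real (k / 2)) * filt_ft g k) \<le> \<epsilon>"
    and e: "\<epsilon> \<ge> 0" and f: "finite (supp f)" and S: "finite S"
  shows "(\<Sum>n\<in>S. (cmod (col g m f n - mult theta_w (col h m f) n))\<^sup>2) \<le> (real (Suc m))\<^sup>2 * \<epsilon>\<^sup>2 * (\<Sum>n\<in>supp f. (cmod (f n))\<^sup>2)"
proof -
  define v where "v = col g m f"
  define u where "u = col h m f"
  define F where "F = filt_ft f"
  have sv: "finite (supp v)" "\<And>k. filt_ft v k = Pp g m k * wav_ft g (2 ^ m * k) * F (2 ^ (m + 1) * k)"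
    using col_sym[OF g(1) f, of m] unfolding v_def F_def by auto
  have su: "finite (supp u)" "\<And>k. filt_ft u k = Pp h m k * wav_ft h (2 ^ m * k) * F (2 ^ (m + 1) * k)"
    using col_sym[OF h(1) f, of m] unfolding u_def F_def by auto
  define Gf where "Gf k = filt_ft v k - theta_w k * filt_ft u k" for k
  have bG: "bm Gf" unfolding Gf_def[abs_def] by (intro bm_diff bm_mult bm_filt bm_theta)
  have eq: "col g m f n - mult theta_w (col h m f) n = fcoeff Gf n" for n
  proof -
    have "col g m f n = fcoeff (filt_ft v) n" unfolding v_def using fc_filt[OF sv(1)[unfolded v_def]] by simp
    moreover have "mult theta_w (col h m f) n = fcoeff (\<lambda>k. theta_w k * filt_ft u k) n"
      unfolding u_def by (rule mult_fin[OF bm_theta su(1)[unfolded u_def]])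
    ultimately show ?thesis unfolding Gf_def
      by (simp add: fc_diff[OF bm_filt bm_mult[OF bm_theta bm_filt]])
  qed
  have "(\<Sum>n\<in>S. (cmod (col g m f n - mult theta_w (col h m f) n))\<^sup>2) = (\<Sum>n\<in>S. (cmod (fcoeff Gf n))\<^sup>2)"
    by (simp add: eq)
  also have "\<dots> \<le> N Gf / (2 * pi)" unfolding N_def by (rule bessel[OF bG S])
  also have "N Gf \<le> (real (Suc m))\<^sup>2 * \<epsilon>\<^sup>2 * N F"
  proof -
    have "Gf = (\<lambda>k. Pp g m k * wav_ft g (2 ^ m * k) * F (2 ^ (m + 1) * k) - theta_w k * (Pp h m k * wav_ft h (2 ^ m * k) * F (2 ^ (m + 1) * k)))"
      unfolding Gf_def[abs_def] sv(2) su(2) by simp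
    then show ?thesis using G_est[OF g(2) h(2) hyp e, of F m] unfolding F_def
      by (simp add: bm_filt per_filt)
  qed
  then have "N Gf / (2 * pi) \<le> (real (Suc m))\<^sup>2 * \<epsilon>\<^sup>2 * N F / (2 * pi)"
    by (intro divide_right_mono) auto
  also have "N F = 2 * pi * (\<Sum>n\<in>supp f. (cmod (f n))\<^sup>2)"
    unfolding N_def F_def filt_ft_tp by (rule parseval_tp[OF f])
  finally show ?thesis by simp
qed

lemma fc_l2:
  assumes "bm \<theta>" shows "l2 (fcoeff \<theta>)"
  unfolding l2_def
proof (rule nonneg_bdd_above_summable_on)
  show "bdd_above (sum (\<lambda>n. (cmod (fcoeff \<theta> n))\<^sup>2) ` {F. F \<subseteq> UNIV \<and> finite F})"
    using bessel[OF assms] by (intro bdd_aboveI[of _ "N \<theta> / (2 * pi)"]) (auto simp: N_def)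
qed simp

lemma amgm:
  fixes a b d :: real
  assumes "d > 0"
  shows "a * b \<le> (d * a\<^sup>2 + b\<^sup>2 / d) / 2"
proof -
  have "0 \<le> (d * a - b)\<^sup>2" by simp
  then have "2 * d * (a * b) \<le> d\<^sup>2 * a\<^sup>2 + b\<^sup>2" by (simp add: power2_eq_square algebra_simps)
  then have "2 * d * (a * b) / (2 * d) \<le> (d\<^sup>2 * a\<^sup>2 + b\<^sup>2) / (2 * d)"
    using assms by (intro divide_right_mono) auto
  also have "(d\<^sup>2 * a\<^sup>2 + b\<^sup>2) / (2 * d) = (d * a\<^sup>2 + b\<^sup>2 / d) / 2"
    using assms by (simp add: field_simps power2_eq_square)
  finally show ?thesis using assms by simp
qed

lemma prod_summ:
  assumes c: "l2 c" and w: "l2 w"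
  shows "(\<lambda>j. cmod (c j * w (n - j))) summable_on UNIV"
proof (rule summable_on_comparison_test)
  show "(\<lambda>j. (1 * (cmod (c j))\<^sup>2 + (cmod (w (n - j)))\<^sup>2 / 1) / 2) summable_on UNIV"
    using c l2_shift(1)[OF w, of n] unfolding l2_def
    by (intro summable_on_cdivide summable_on_add) auto
  show "cmod (c j * w (n - j)) \<le> (1 * (cmod (c j))\<^sup>2 + (cmod (w (n - j)))\<^sup>2 / 1) / 2" for j
    unfolding norm_mult by (rule amgm) simp
qed simp

lemma infsum_diff_c:
  fixes f g :: "'a \<Rightarrow> complex"
  assumes "f summable_on A" "g summable_on A"
  shows "(\<Sum>\<^sub>\<infinity>x\<in>A. f x - g x) = (\<Sum>\<^sub>\<infinity>x\<in>A. f x) - (\<Sum>\<^sub>\<infinity>x\<in>A. g x)"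
proof -
  have "(\<Sum>\<^sub>\<infinity>x\<in>A. f x + - g x) = (\<Sum>\<^sub>\<infinity>x\<in>A. f x) + (\<Sum>\<^sub>\<infinity>x\<in>A. - g x)"
  proof (rule infsum_add)
    show "(\<lambda>x. - g x) summable_on A" using assms(2) summable_on_uminus by blast
  qed (rule assms(1))
  then show ?thesis by (simp add: infsum_uminus)
qed

lemma mult_close:
  assumes c: "l2 (fcoeff \<theta>)" and x: "l2 x" and y: "l2 y" and d: "d > 0"
  shows "cmod (mult \<theta> x n - mult \<theta> y n) \<le> (d * nrm (fcoeff \<theta>) + nrm (\<lambda>i. x i - y i) / d) / 2"
proof -
  define c where "c = fcoeff \<theta>"
  define z where "z = (\<lambda>i. x i - y i)"
  have z: "l2 z" unfolding z_def by (rule l2_diff[OF x y])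
  have sx: "(\<lambda>j. c j * x (n - j)) summable_on UNIV"
    by (rule abs_summable_summable) (use prod_summ[OF c x] in \<open>simp add: c_def\<close>)
  have sy: "(\<lambda>j. c j * y (n - j)) summable_on UNIV"
    by (rule abs_summable_summable) (use prod_summ[OF c y] in \<open>simp add: c_def\<close>)
  have "mult \<theta> x n - mult \<theta> y n = (\<Sum>\<^sub>\<infinity>j. c j * x (n - j) - c j * y (n - j))"
    unfolding mult_def c_def using infsum_diff_c[OF sx sy] unfolding c_def by simp
  also have "\<dots> = (\<Sum>\<^sub>\<infinity>j. c j * z (n - j))" unfolding z_def by (simp add: right_diff_distrib)
  finally have eq: "mult \<theta> x n - mult \<theta> y n = (\<Sum>\<^sub>\<infinity>j. c j * z (n - j))" .
  have az: "(\<lambda>j. cmod (c j * z (n - j))) summable_on UNIV"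
    using prod_summ[OF c z] unfolding c_def .
  have bs: "(\<lambda>j. (d * (cmod (c j))\<^sup>2 + (cmod (z (n - j)))\<^sup>2 / d) / 2) summable_on UNIV"
    using c l2_shift(1)[OF z, of n] unfolding l2_def c_def
    by (intro summable_on_cdivide summable_on_add summable_on_cmult_right) auto
  have "cmod (mult \<theta> x n - mult \<theta> y n) \<le> (\<Sum>\<^sub>\<infinity>j. cmod (c j * z (n - j)))"
    unfolding eq by (rule norm_infsum_bound) (use az in simp)
  also have "\<dots> \<le> (\<Sum>\<^sub>\<infinity>j. (d * (cmod (c j))\<^sup>2 + (cmod (z (n - j)))\<^sup>2 / d) / 2)"
    by (rule infsum_mono[OF az bs]) (unfold norm_mult, rule amgm[OF d])
  also have "\<dots> = (d * nrm c + nrm z / d) / 2"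
  proof -
    have s1: "(\<lambda>j. d * (cmod (c j))\<^sup>2) summable_on UNIV" using c unfolding l2_def c_def
      by (intro summable_on_cmult_right)
    have s2: "(\<lambda>j. (cmod (z (n - j)))\<^sup>2 / d) summable_on UNIV" using l2_shift(1)[OF z, of n]
      by (intro summable_on_cdivide)
    have "(\<Sum>\<^sub>\<infinity>j. (d * (cmod (c j))\<^sup>2 + (cmod (z (n - j)))\<^sup>2 / d) / 2)
        = (\<Sum>\<^sub>\<infinity>j. d * (cmod (c j))\<^sup>2 + (cmod (z (n - j)))\<^sup>2 / d) / 2"
      by (rule infsum_cdivide) 
    also have "(\<Sum>\<^sub>\<infinity>j. d * (cmod (c j))\<^sup>2 + (cmod (z (n - j)))\<^sup>2 / d) = d * nrm c + nrm z / d"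
      using infsum_add[OF s1 s2] l2_shift(2)[OF z, of n] unfolding nrm_def
      by (simp add: infsum_cmult_right' infsum_cdivide)
    finally show ?thesis .
  qed
  finally show ?thesis unfolding c_def z_def .
qed


definition trunc :: "(int \<Rightarrow> complex) \<Rightarrow> nat \<Rightarrow> int \<Rightarrow> complex" where
  "trunc f p i = (if \<bar>i\<bar> \<le> int p then f i else 0)"

lemma supp_trunc: "supp (trunc f p) \<subseteq> {- int p..int p}" "finite (supp (trunc f p))"
proof -
  show "supp (trunc f p) \<subseteq> {- int p..int p}" unfolding supp_def trunc_def by auto
  then show "finite (supp (trunc f p))" by (rule finite_subset) simp
qed

lemma l2_trunc: "l2 f \<Longrightarrow> l2 (trunc f p)"
  unfolding l2_def
  by (rule summable_on_comparison_test[of "\<lambda>n. (cmod (f n))\<^sup>2"]) (auto simp: trunc_def)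

lemma trunc_sum_le:
  assumes "l2 f" shows "(\<Sum>n\<in>supp (trunc f p). (cmod (trunc f p n))\<^sup>2) \<le> nrm f"
proof -
  have "(\<Sum>n\<in>supp (trunc f p). (cmod (trunc f p n))\<^sup>2) = (\<Sum>n\<in>supp (trunc f p). (cmod (f n))\<^sup>2)"
    by (intro sum.cong refl) (auto simp: supp_def trunc_def split: if_splits)
  also have "\<dots> \<le> nrm f" unfolding nrm_def
    by (rule finite_sum_le_infsum) (use assms supp_trunc(2) in \<open>auto simp: l2_def\<close>)
  finally show ?thesis .
qed

lemma trunc_tail:
  assumes f: "l2 f" shows "(\<lambda>p. nrm (\<lambda>i. f i - trunc f p i)) \<longlonglongrightarrow> 0"
proof (rule LIMSEQ_I)
  fix r :: real assume r: "r > 0"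
  obtain F0 where F0: "finite F0" "dist (\<Sum>i\<in>F0. (cmod (f i))\<^sup>2) (nrm f) \<le> r / 2"
    using infsum_finite_approximation[of "\<lambda>i. (cmod (f i))\<^sup>2" UNIV "r / 2"] f r
    unfolding l2_def nrm_def by auto
  define no where "no = nat (Max (insert 0 (abs ` F0)))"
  have no: "\<bar>i\<bar> \<le> int no" if "i \<in> F0" for i
  proof -
    have "\<bar>i\<bar> \<le> Max (insert 0 (abs ` F0))" using that F0(1) by (intro Max_ge) auto
    then show ?thesis unfolding no_def by linarith
  qed
  show "\<exists>no. \<forall>p\<ge>no. norm (nrm (\<lambda>i. f i - trunc f p i) - 0) < r"
  proof (intro exI allI impI)
    fix p assume p: "no \<le> p"
    define d where "d = (\<lambda>i. f i - trunc f p i)"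
    have d0: "d i = 0" if "i \<in> F0" for i using no[OF that] p unfolding d_def trunc_def by auto
    have dle: "(cmod (d i))\<^sup>2 \<le> (cmod (f i))\<^sup>2" for i unfolding d_def trunc_def by auto
    have ds: "(\<lambda>i. (cmod (d i))\<^sup>2) summable_on UNIV"
      using f unfolding l2_def by (rule summable_on_comparison_test) (auto simp: dle)
    have "nrm d \<le> nrm f - (\<Sum>i\<in>F0. (cmod (f i))\<^sup>2)"
      unfolding nrm_def
    proof (rule infsum_le_finite_sums[OF ds])
      fix F :: "int set" assume F: "finite F"
      have "(\<Sum>i\<in>F. (cmod (d i))\<^sup>2) = (\<Sum>i\<in>F - F0. (cmod (d i))\<^sup>2)"
        by (rule sum.mono_neutral_right) (use F d0 in auto)
      also have "\<dots> \<le> (\<Sum>i\<in>F - F0. (cmod (f i))\<^sup>2)" by (intro sum_mono dle)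
      also have "\<dots> = (\<Sum>i\<in>(F - F0) \<union> F0. (cmod (f i))\<^sup>2) - (\<Sum>i\<in>F0. (cmod (f i))\<^sup>2)"
        by (subst sum.union_disjoint) (use F F0 in auto)
      also have "(\<Sum>i\<in>(F - F0) \<union> F0. (cmod (f i))\<^sup>2) \<le> (\<Sum>\<^sub>\<infinity>i. (cmod (f i))\<^sup>2)"
        by (rule finite_sum_le_infsum) (use f F F0 in \<open>auto simp: l2_def\<close>)
      finally show "(\<Sum>i\<in>F. (cmod (d i))\<^sup>2) \<le> (\<Sum>\<^sub>\<infinity>i. (cmod (f i))\<^sup>2) - (\<Sum>i\<in>F0. (cmod (f i))\<^sup>2)"
        by simp
    qed
    also have "\<dots> \<le> r / 2" using F0(2) unfolding dist_real_def by linarith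
    finally have "nrm d \<le> r / 2" .
    then show "norm (nrm (\<lambda>i. f i - trunc f p i) - 0) < r"
      using nrm_nonneg[of d] r unfolding d_def by simp
  qed
qed

lemma loc_trunc:
  assumes "loc \<Phi>" shows "\<forall>\<^sub>F p in sequentially. \<Phi> (trunc f p) n = \<Phi> f n"
proof -
  obtain K where K: "finite K" "\<And>x y. (\<forall>i\<in>K. x i = y i) \<Longrightarrow> \<Phi> x n = \<Phi> y n"
    using assms unfolding loc_def by blast
  define no where "no = nat (Max (insert 0 (abs ` K)))"
  have no: "\<bar>i\<bar> \<le> int no" if "i \<in> K" for i
  proof -
    have "\<bar>i\<bar> \<le> Max (insert 0 (abs ` K))" using that K(1) by (intro Max_ge) auto
    then show ?thesis unfolding no_def by linarith
  qed
  show ?thesis unfolding eventually_sequentially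
  proof (intro exI allI impI)
    fix p assume "no \<le> p"
    then have "\<forall>i\<in>K. trunc f p i = f i" using no unfolding trunc_def by force
    then show "\<Phi> (trunc f p) n = \<Phi> f n" by (rule K(2))
  qed
qed

lemma conv_mult:
  assumes h: "finite (supp h)" and f: "l2 f"
  shows "(\<lambda>p. mult theta_w (col h m (trunc f p)) n) \<longlonglongrightarrow> mult theta_w (col h m f) n"
proof (rule LIMSEQ_I)
  fix r :: real assume r: "r > 0"
  obtain M where bM: "bop (col h m) M" using bop_col[OF h] by blast
  have M0: "M \<ge> 0" using bM unfolding bop_def by auto
  define C where "C = nrm (fcoeff theta_w)"
  have c: "l2 (fcoeff theta_w)" by (rule fc_l2[OF bm_theta])
  have C0: "C \<ge> 0" unfolding C_def by (rule nrm_nonneg)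
  define d where "d = r / (C + 1)"
  have d: "d > 0" unfolding d_def using r C0 by simp
  have dC: "d * C < r" unfolding d_def using r C0 by (simp add: field_simps)
  obtain no where no: "\<And>p. p \<ge> no \<Longrightarrow> norm (nrm (\<lambda>i. f i - trunc f p i) - 0) < r * d / (M + 1)"
    using LIMSEQ_D[OF trunc_tail[OF f], of "r * d / (M + 1)"] r d M0 by auto
  show "\<exists>no. \<forall>p\<ge>no. norm (mult theta_w (col h m (trunc f p)) n - mult theta_w (col h m f) n) < r"
  proof (intro exI allI impI)
    fix p assume p: "no \<le> p"
    define t where "t = nrm (\<lambda>i. f i - trunc f p i)"
    have t0: "t \<ge> 0" unfolding t_def by (rule nrm_nonneg)
    have tb: "t < r * d / (M + 1)" using no[OF p] t0 unfolding t_def by simp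
    have lf: "l2 (col h m f)" using bM f unfolding bop_def by auto
    have ltr: "l2 (col h m (trunc f p))" using bM l2_trunc[OF f] unfolding bop_def by auto
    have ldiff: "l2 (\<lambda>i. f i - trunc f p i)" by (rule l2_diff[OF f l2_trunc[OF f]])
    have lin: "col h m (\<lambda>i. f i - trunc f p i) = (\<lambda>i. col h m f i - col h m (trunc f p) i)"
      using bM unfolding bop_def by blast
    have nd: "nrm (\<lambda>i. col h m f i - col h m (trunc f p) i) \<le> M * t"
      using bM ldiff unfolding bop_def t_def lin[symmetric] by blast
    have "cmod (mult theta_w (col h m f) n - mult theta_w (col h m (trunc f p)) n)
        \<le> (d * C + nrm (\<lambda>i. col h m f i - col h m (trunc f p) i) / d) / 2"
      unfolding C_def by (rule mult_close[OF c lf ltr d])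
    also have "\<dots> \<le> (d * C + M * t / d) / 2"
      using nd d by (intro divide_right_mono add_left_mono) auto
    also have "M * t / d < r"
    proof -
      have "M * t \<le> (M + 1) * t" using t0 by (simp add: algebra_simps)
      also have "\<dots> < (M + 1) * (r * d / (M + 1))" using tb M0 by (intro mult_strict_left_mono) auto
      also have "\<dots> = r * d" using M0 by simp
      finally show ?thesis using d by (simp add: field_simps)
    qed
    then have "(d * C + M * t / d) / 2 < r" using dC by simp
    finally show "norm (mult theta_w (col h m (trunc f p)) n - mult theta_w (col h m f) n) < r"
      by (simp add: norm_minus_commute)
  qed
qed

lemma inf_est:
  assumes g: "finite (supp g)" "scal (filt_ft g)" and h: "finite (supp h)" "scal (filt_ft h)"
    and hyp: "\<forall>k\<in>{-pi<..<pi}. cmod (filt_ft h k - exp (\<i> * of_real (k / 2)) * filt_ft g k) \<le> \<epsilon>"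
    and e: "\<epsilon> \<ge> 0" and f: "l2 f" and S: "finite S"
  shows "(\<Sum>n\<in>S. (cmod (col g m f n - mult theta_w (col h m f) n))\<^sup>2) \<le> (real (Suc m))\<^sup>2 * \<epsilon>\<^sup>2 * nrm f"
proof (rule LIMSEQ_le_const2)
  show "(\<lambda>p. \<Sum>n\<in>S. (cmod (col g m (trunc f p) n - mult theta_w (col h m (trunc f p)) n))\<^sup>2)
        \<longlonglongrightarrow> (\<Sum>n\<in>S. (cmod (col g m f n - mult theta_w (col h m f) n))\<^sup>2)"
  proof (intro tendsto_sum tendsto_power tendsto_norm tendsto_diff)
    fix n
    show "(\<lambda>p. col g m (trunc f p) n) \<longlonglongrightarrow> col g m f n"
      by (rule tendsto_eventually) (rule loc_trunc[OF loc_col[OF g(1)]])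
    show "(\<lambda>p. mult theta_w (col h m (trunc f p)) n) \<longlonglongrightarrow> mult theta_w (col h m f) n"
      by (rule conv_mult[OF h(1) f])
  qed
  show "\<exists>p0. \<forall>p\<ge>p0. (\<Sum>n\<in>S. (cmod (col g m (trunc f p) n - mult theta_w (col h m (trunc f p)) n))\<^sup>2)
        \<le> (real (Suc m))\<^sup>2 * \<epsilon>\<^sup>2 * nrm f"
  proof (intro exI allI impI)
    fix p :: nat
    have "(\<Sum>n\<in>S. (cmod (col g m (trunc f p) n - mult theta_w (col h m (trunc f p)) n))\<^sup>2)
        \<le> (real (Suc m))\<^sup>2 * \<epsilon>\<^sup>2 * (\<Sum>n\<in>supp (trunc f p). (cmod (trunc f p n))\<^sup>2)"
      by (rule fin_est[OF g h hyp e supp_trunc(2) S])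
    also have "\<dots> \<le> (real (Suc m))\<^sup>2 * \<epsilon>\<^sup>2 * nrm f"
      by (intro mult_left_mono trunc_sum_le f) auto
    finally show "(\<Sum>n\<in>S. (cmod (col g m (trunc f p) n - mult theta_w (col h m (trunc f p)) n))\<^sup>2)
        \<le> (real (Suc m))\<^sup>2 * \<epsilon>\<^sup>2 * nrm f" .
  qed
qed

lemma nrm_est:
  assumes g: "finite (supp g)" "scal (filt_ft g)" and h: "finite (supp h)" "scal (filt_ft h)"
    and hyp: "\<forall>k\<in>{-pi<..<pi}. cmod (filt_ft h k - exp (\<i> * of_real (k / 2)) * filt_ft g k) \<le> \<epsilon>"
    and e: "\<epsilon> \<ge> 0" and f: "l2 f"
  shows "nrm (\<lambda>n. col g m f n - mult theta_w (col h m f) n) \<le> (real (Suc m))\<^sup>2 * \<epsilon>\<^sup>2 * nrm f"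
proof (cases "(\<lambda>n. (cmod (col g m f n - mult theta_w (col h m f) n))\<^sup>2) summable_on UNIV")
  case True
  show ?thesis unfolding nrm_def[of "\<lambda>n. col g m f n - mult theta_w (col h m f) n"]
    by (rule infsum_le_finite_sums[OF True]) (rule inf_est[OF g h hyp e f])
next
  case False
  then have "nrm (\<lambda>n. col g m f n - mult theta_w (col h m f) n) = 0"
    unfolding nrm_def by (simp add: infsum_not_exists)
  then show ?thesis using nrm_nonneg[of f] by simp
qed


lemma mult_zero: "mult \<theta> (\<lambda>_. 0) = (\<lambda>_. 0)"
  unfolding mult_def by simp

lemma up_zero: "up (\<lambda>_. 0) = (\<lambda>_. 0)"
  unfolding up_def by auto

lemma funpow_zero:
  fixes \<Phi> :: "(int \<Rightarrow> complex) \<Rightarrow> (int \<Rightarrow> complex)"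
  assumes "\<Phi> (\<lambda>_. 0) = (\<lambda>_. 0)" shows "(\<Phi> ^^ m) (\<lambda>_. 0) = (\<lambda>_. 0)"
  by (induction m) (simp_all add: assms)

lemma wcol_zero: "wcol g L l (\<lambda>_. 0) = (\<lambda>_. 0)"
proof -
  have X: "(mult (filt_ft g) \<circ> up) (\<lambda>_. 0) = (\<lambda>_. 0)" by (simp add: up_zero mult_zero)
  show ?thesis unfolding wcol_def
    by (simp add: funpow_zero[of "mult (filt_ft g) \<circ> up", OF X] up_zero mult_zero)
qed

lemma wcol_col: "1 \<le> l \<Longrightarrow> l \<le> L \<Longrightarrow> wcol g L l f = col g (l - 1) f"
  unfolding wcol_def col_def by simp

lemma Wdag_ket:
  assumes "1 \<le> l" "l \<le> L"
  shows "Wdag g L (ket_embed l f) = col g (l - 1) f"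
proof
  fix n
  have "Wdag g L (ket_embed l f) n = (\<Sum>l'=1..L+1. if l' = l then wcol g L l f n else 0)"
    unfolding Wdag_def ket_embed_def
    by (intro sum.cong refl) (auto simp: wcol_zero)
  also have "\<dots> = wcol g L l f n" using assms by (simp add: sum.delta')
  finally show "Wdag g L (ket_embed l f) n = col g (l - 1) f n" using wcol_col[OF assms] by simp
qed

lemma Wdag_pw:
  "Wdag g L (p_w L F) = (\<lambda>n. \<Sum>l'=1..L. col g (l' - 1) (\<lambda>m. F (m, l')) n)"
proof
  fix n
  have "Wdag g L (p_w L F) n = (\<Sum>l'=1..L+1. if l' \<le> L then col g (l' - 1) (\<lambda>m. F (m, l')) n else 0)"
    unfolding Wdag_def p_w_def
    by (intro sum.cong refl) (auto simp: wcol_zero wcol_col)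
  also have "\<dots> = (\<Sum>l'=1..L. col g (l' - 1) (\<lambda>m. F (m, l')) n)"
    by (subst sum.If_cases) (auto intro!: sum.cong)
  finally show "Wdag g L (p_w L F) n = (\<Sum>l'=1..L. col g (l' - 1) (\<lambda>m. F (m, l')) n)" .
qed

lemma summable_finsum_c:
  fixes f :: "'i \<Rightarrow> 'a \<Rightarrow> complex"
  assumes "finite S" "\<And>j. j \<in> S \<Longrightarrow> f j summable_on A"
  shows "(\<lambda>n. \<Sum>j\<in>S. f j n) summable_on A \<and> (\<Sum>\<^sub>\<infinity>n\<in>A. \<Sum>j\<in>S. f j n) = (\<Sum>j\<in>S. \<Sum>\<^sub>\<infinity>n\<in>A. f j n)"
  using assms
proof (induction S rule: finite_induct)
  case empty then show ?case by simp
next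
  case (insert i S)
  then have IH: "(\<lambda>n. \<Sum>j\<in>S. f j n) summable_on A" "(\<Sum>\<^sub>\<infinity>n\<in>A. \<Sum>j\<in>S. f j n) = (\<Sum>j\<in>S. \<Sum>\<^sub>\<infinity>n\<in>A. f j n)"
    by auto
  have fi: "f i summable_on A" using insert by auto
  show ?case using insert.hyps IH fi
    by (simp add: summable_on_add infsum_add)
qed

lemma mult_sum:
  assumes A: "finite A" and u: "\<And>a. a \<in> A \<Longrightarrow> l2 (u a)"
  shows "mult theta_w (\<lambda>n. \<Sum>a\<in>A. u a n) n = (\<Sum>a\<in>A. mult theta_w (u a) n)"
proof -
  have c: "l2 (fcoeff theta_w)" by (rule fc_l2[OF bm_theta])
  have s: "(\<lambda>j. fcoeff theta_w j * u a (n - j)) summable_on UNIV" if "a \<in> A" for a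
    by (rule abs_summable_summable) (use prod_summ[OF c u[OF that]] in simp)
  have "mult theta_w (\<lambda>n. \<Sum>a\<in>A. u a n) n = (\<Sum>\<^sub>\<infinity>j. \<Sum>a\<in>A. fcoeff theta_w j * u a (n - j))"
    unfolding mult_def by (simp add: sum_distrib_left)
  also have "\<dots> = (\<Sum>a\<in>A. \<Sum>\<^sub>\<infinity>j. fcoeff theta_w j * u a (n - j))"
    using summable_finsum_c[of A "\<lambda>a j. fcoeff theta_w j * u a (n - j)" UNIV] A s by blast
  finally show ?thesis unfolding mult_def .
qed

lemma slice_l2:
  fixes F :: "int \<times> nat \<Rightarrow> complex"
  assumes "F \<in> l2_space"
  shows "l2 (\<lambda>m. F (m, l))" "nrm (\<lambda>m. F (m, l)) \<le> (\<Sum>\<^sub>\<infinity>p. (cmod (F p))\<^sup>2)"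
proof -
  have inj: "inj_on (\<lambda>m. (m, l)) UNIV" by (auto simp: inj_on_def)
  have s: "(\<lambda>p. (cmod (F p))\<^sup>2) summable_on UNIV" using assms unfolding l2_space_def by simp
  have s2: "(\<lambda>p. (cmod (F p))\<^sup>2) summable_on range (\<lambda>m. (m, l))"
    by (rule summable_on_subset_banach[OF s]) auto
  show "l2 (\<lambda>m. F (m, l))" unfolding l2_def using s2 unfolding summable_on_reindex[OF inj] by (simp add: o_def)
  have "nrm (\<lambda>m. F (m, l)) = (\<Sum>\<^sub>\<infinity>p\<in>range (\<lambda>m. (m, l)). (cmod (F p))\<^sup>2)"
    unfolding nrm_def infsum_reindex[OF inj] by (simp add: o_def)
  also have "\<dots> \<le> (\<Sum>\<^sub>\<infinity>p. (cmod (F p))\<^sup>2)"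
    by (rule infsum_mono_neutral[OF s2 s]) auto
  finally show "nrm (\<lambda>m. F (m, l)) \<le> (\<Sum>\<^sub>\<infinity>p. (cmod (F p))\<^sup>2)" .
qed

lemma ratio_bound:
  assumes "sqrt a \<le> c * sqrt b" "c \<ge> 0" "b \<ge> 0"
  shows "sqrt a / sqrt b \<le> c"
proof (cases "sqrt b = 0")
  case True then show ?thesis using assms by simp
next
  case False
  then have "sqrt b > 0" using assms(3) by simp
  then show ?thesis using assms by (simp add: divide_le_eq)
qed


lemma l2norm_nrm: "l2norm x = sqrt (nrm x)"
  unfolding l2norm_def nrm_def by simp

lemma l2_space_l2: "f \<in> l2_space \<Longrightarrow> l2 f"
  unfolding l2_space_def l2_def by simp

lemma sqrt_bound:
  assumes "a \<le> c\<^sup>2 * b" "c \<ge> 0" "b \<ge> 0"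
  shows "sqrt a \<le> c * sqrt b"
proof -
  have "sqrt a \<le> sqrt (c\<^sup>2 * b)" using assms(1) by (rule real_sqrt_le_mono)
  also have "\<dots> = c * sqrt b" using assms(2,3) by (simp add: real_sqrt_mult)
  finally show ?thesis .
qed

lemma sf_facts:
  assumes "scaling_filter h" shows "finite (supp h)" "scal (filt_ft h)"
  using assms unfolding scaling_filter_def scal_def supp_def by auto

lemma part1:
  assumes g: "finite (supp g)" "scal (filt_ft g)" and h: "finite (supp h)" "scal (filt_ft h)"
    and hyp: "\<forall>k\<in>{-pi<..<pi}. cmod (filt_ft h k - exp (\<i> * of_real (k / 2)) * filt_ft g k) \<le> \<epsilon>"
    and e: "\<epsilon> \<ge> 0" and l: "1 \<le> l"
  shows "op_norm l2_space (\<lambda>f. (\<lambda>n. col g (l - 1) f n - mult theta_w (col h (l - 1) f) n)) \<le> \<epsilon> * real l"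
  unfolding op_norm_def
proof (rule cSUP_least)
  show "l2_space \<noteq> {}" unfolding l2_space_def by (auto intro!: exI[of _ "\<lambda>_. 0"])
  fix f :: "int \<Rightarrow> complex" assume "f \<in> l2_space"
  then have f: "l2 f" by (rule l2_space_l2)
  have "nrm (\<lambda>n. col g (l - 1) f n - mult theta_w (col h (l - 1) f) n) \<le> (real (Suc (l - 1)))\<^sup>2 * \<epsilon>\<^sup>2 * nrm f"
    by (rule nrm_est[OF g h hyp e f])
  also have "(real (Suc (l - 1)))\<^sup>2 * \<epsilon>\<^sup>2 = (\<epsilon> * real l)\<^sup>2" using l by (simp add: power_mult_distrib)
  finally have "sqrt (nrm (\<lambda>n. col g (l - 1) f n - mult theta_w (col h (l - 1) f) n)) \<le> (\<epsilon> * real l) * sqrt (nrm f)"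
    by (rule sqrt_bound) (use e nrm_nonneg in auto)
  then show "l2norm (\<lambda>n. col g (l - 1) f n - mult theta_w (col h (l - 1) f) n) / l2norm f \<le> \<epsilon> * real l"
    unfolding l2norm_nrm by (rule ratio_bound) (use e nrm_nonneg in auto)
qed

lemma part2:
  assumes g: "finite (supp g)" "scal (filt_ft g)" and h: "finite (supp h)" "scal (filt_ft h)"
    and hyp: "\<forall>k\<in>{-pi<..<pi}. cmod (filt_ft h k - exp (\<i> * of_real (k / 2)) * filt_ft g k) \<le> \<epsilon>"
    and e: "\<epsilon> \<ge> 0" and L: "1 \<le> L"
  shows "op_norm (tensor_space L) (\<lambda>F. (\<lambda>n. Wdag g L (p_w L F) n - mult theta_w (Wdag h L (p_w L F)) n)) \<le> \<epsilon> * (real L)\<^sup>2"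
  unfolding op_norm_def
proof (rule cSUP_least)
  show "tensor_space L \<noteq> {}" unfolding tensor_space_def l2_space_def by (auto intro!: exI[of _ "\<lambda>_. 0"])
  fix F :: "int \<times> nat \<Rightarrow> complex" assume "F \<in> tensor_space L"
  then have F: "F \<in> l2_space" unfolding tensor_space_def by auto
  define NF where "NF = (\<Sum>\<^sub>\<infinity>p. (cmod (F p))\<^sup>2)"
  have NF0: "NF \<ge> 0" unfolding NF_def by (rule infsum_nonneg) simp
  define Fl where "Fl l' = (\<lambda>m. F (m, l'))" for l'
  have lFl: "l2 (Fl l')" for l' unfolding Fl_def by (rule slice_l2(1)[OF F])
  have nFl: "nrm (Fl l') \<le> NF" for l' unfolding Fl_def NF_def by (rule slice_l2(2)[OF F])
  define D where "D l' n = col g (l' - 1) (Fl l') n - mult theta_w (col h (l' - 1) (Fl l')) n" for l' n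
  define T where "T = (\<lambda>n. Wdag g L (p_w L F) n - mult theta_w (Wdag h L (p_w L F)) n)"
  have Teq: "T n = (\<Sum>l'=1..L. D l' n)" for n
  proof -
    have lh: "l2 (col h (l' - 1) (Fl l'))" for l'
    proof -
      obtain M where "bop (col h (l' - 1)) M" using bop_col[OF h(1)] by blast
      then show ?thesis using lFl[of l'] unfolding bop_def by blast
    qed
    have "mult theta_w (Wdag h L (p_w L F)) n = mult theta_w (\<lambda>n. \<Sum>l'=1..L. col h (l' - 1) (Fl l') n) n"
      unfolding Wdag_pw Fl_def ..
    also have "\<dots> = (\<Sum>l'=1..L. mult theta_w (col h (l' - 1) (Fl l')) n)"
      by (rule mult_sum) (rule finite_atLeastAtMost, rule lh)
    finally show ?thesis unfolding T_def D_def Wdag_pw Fl_def by (simp add: sum_subtractf)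
  qed
  have bound: "(\<Sum>n\<in>S. (cmod (T n))\<^sup>2) \<le> (\<epsilon> * (real L)\<^sup>2)\<^sup>2 * NF" if S: "finite S" for S
  proof -
    have "(\<Sum>n\<in>S. (cmod (T n))\<^sup>2) \<le> (\<Sum>n\<in>S. real L * (\<Sum>l'=1..L. (cmod (D l' n))\<^sup>2))"
      unfolding Teq by (intro sum_mono) (use cmod_sum_sq[of "\<lambda>l'. D l' _" "{1..L}"] in simp)
    also have "\<dots> = real L * (\<Sum>l'=1..L. \<Sum>n\<in>S. (cmod (D l' n))\<^sup>2)"
      by (simp add: sum_distrib_left sum.swap[of _ S])
    also have "\<dots> \<le> real L * (\<Sum>l'=1..L. (real L)\<^sup>2 * \<epsilon>\<^sup>2 * NF)"
    proof (intro mult_left_mono sum_mono)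
      fix l' assume l': "l' \<in> {1..L}"
      have "(\<Sum>n\<in>S. (cmod (D l' n))\<^sup>2) \<le> (real (Suc (l' - 1)))\<^sup>2 * \<epsilon>\<^sup>2 * nrm (Fl l')"
        unfolding D_def by (rule inf_est[OF g h hyp e lFl S])
      also have "\<dots> \<le> (real L)\<^sup>2 * \<epsilon>\<^sup>2 * NF"
        using l' nFl[of l'] nrm_nonneg[of "Fl l'"] e
        by (intro mult_mono power_mono) auto
      finally show "(\<Sum>n\<in>S. (cmod (D l' n))\<^sup>2) \<le> (real L)\<^sup>2 * \<epsilon>\<^sup>2 * NF" .
    qed auto
    also have "\<dots> = (\<epsilon> * (real L)\<^sup>2)\<^sup>2 * NF"
      by (simp add: power2_eq_square)
    finally show ?thesis .
  qed
  have nT: "(\<Sum>\<^sub>\<infinity>n. (cmod (T n))\<^sup>2) \<le> (\<epsilon> * (real L)\<^sup>2)\<^sup>2 * NF"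
  proof (cases "(\<lambda>n. (cmod (T n))\<^sup>2) summable_on UNIV")
    case True
    then show ?thesis by (rule infsum_le_finite_sums) (rule bound)
  next
    case False
    then show ?thesis using NF0 by (simp add: infsum_not_exists)
  qed
  have "sqrt (\<Sum>\<^sub>\<infinity>n. (cmod (T n))\<^sup>2) \<le> (\<epsilon> * (real L)\<^sup>2) * sqrt NF"
    by (rule sqrt_bound[OF nT]) (use e NF0 in auto)
  then show "l2norm (\<lambda>n. Wdag g L (p_w L F) n - mult theta_w (Wdag h L (p_w L F)) n) / l2norm F \<le> \<epsilon> * (real L)\<^sup>2"
    unfolding l2norm_def T_def[symmetric] NF_def[symmetric]
    by (rule ratio_bound) (use e NF0 in auto)
qed

theorem lemma2:
  fixes hs gs :: "int \<Rightarrow> complex" and \<epsilon> :: real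
  assumes "scaling_filter hs" and "scaling_filter gs"
    and "\<epsilon> \<ge> 0"
    and "\<forall>k\<in>{-pi<..<pi}. cmod (filt_ft hs k - exp (\<i> * of_real (k / 2)) * filt_ft gs k) \<le> \<epsilon>"
  shows "\<forall>L::nat. L \<ge> 1 \<longrightarrow>
           (\<forall>l\<in>{1..L}.
              op_norm l2_space (\<lambda>f. (\<lambda>n. Wdag gs L (ket_embed l f) n
                                      - mult theta_w (Wdag hs L (ket_embed l f)) n))
                \<le> \<epsilon> * real l) \<and>
           op_norm (tensor_space L) (\<lambda>F. (\<lambda>n. Wdag gs L (p_w L F) n
                                      - mult theta_w (Wdag hs L (p_w L F)) n))
                \<le> \<epsilon> * (real L)\<^sup>2"
proof (intro allI impI conjI ballI)
  fix L :: nat assume L: "1 \<le> L"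
  note h = sf_facts[OF assms(1)] and g = sf_facts[OF assms(2)]
  show "op_norm (tensor_space L) (\<lambda>F. (\<lambda>n. Wdag gs L (p_w L F) n - mult theta_w (Wdag hs L (p_w L F)) n))
          \<le> \<epsilon> * (real L)\<^sup>2"
    by (rule part2[OF g h assms(4) assms(3) L])
  fix l assume l: "l \<in> {1..L}"
  have eq: "(\<lambda>f. (\<lambda>n. Wdag gs L (ket_embed l f) n - mult theta_w (Wdag hs L (ket_embed l f)) n))
          = (\<lambda>f. (\<lambda>n. col gs (l - 1) f n - mult theta_w (col hs (l - 1) f) n))"
    using l by (simp add: Wdag_ket)
  show "op_norm l2_space (\<lambda>f. (\<lambda>n. Wdag gs L (ket_embed l f) n - mult theta_w (Wdag hs L (ket_embed l f)) n))
          \<le> \<epsilon> * real l"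
    unfolding eq by (rule part1[OF g h assms(4) assms(3)]) (use l in auto)
qed


end
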